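(* Let $n,N\ge1$, $T>0$, $\mathbf c\in\mathbb R^n_+$, $\mathbf d\in\mathbb R^n_+$, $C\ge0$ with $d_{i+1}-d_i\le c_{i+1}$ for $i\in[n-1]$. Suppose the support set is the box $\mathcal U=\{\mathbf u\in\mathbb R^n:\mathbf u^{L}\le\mathbf u\le\mathbf u^{U}\}$ with $0\le u^L_i<u^U_i<\infty$ for all $i$, and let $\widehat{\mathbf u}^1,\dots,\widehat{\mathbf u}^N\in\mathcal U$, $\epsilon>0$. (i) If $p=1$, W-DRAS has the same optimal value and the same set of optimal schedules $\mathbf s$ as the linear program $$\min_{\rho,\mathbf s,\boldsymbol\gamma,\mathbf z}\ \epsilon\rho+\frac1N\sum_{j=1}^N\sum_{i=1}^n\gamma_{ij}$$ subject to, for all $i\in[n]$, $\ell\in[i,n+1]_{\mathbb Z}$, $j\in[N]$: $\sum_{k=i}^{\min\{\ell,n\}}\gamma_{kj}\ge\sum_{k=i}^{\min\{\ell,n\}}z_{k\ell j}$; $z_{i\ell j}+\pi_{i\ell}s_i+|u^L_i-\widehat u^j_i|\rho\ge\pi_{i\ell}u^L_i$; $z_{i\ell j}+\pi_{i\ell}s_i\ge\pi_{i\ell}\widehat u^j_i$; $z_{i\ell j}+\pi_{i\ell}s_i+|u^U_i-\widehat u^j_i|\rho\ge\pi_{i\ell}u^U_i$; and $\rho\ge0$, $\mathbf s\in\mathcal S$. (ii) If $p=2$, W-DRAS has the same optimal value and the same set of optimal schedules $\mathbf s$ as the second-order cone program $$\min_{\rho,\mathbf s,\boldsymbol\gamma,\mathbf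 z,\boldsymbol\beta,\mathbf r}\ \epsilon^2\rho+\frac1N\sum_{j=1}^N\sum_{i=1}^n\gamma_{ij}$$ subject to, for all $i\in[n]$, $\ell\in[i,n+1]_{\mathbb Z}$, $j\in[N]$: $\sum_{k=i}^{\min\{\ell,n\}}\gamma_{kj}\ge\sum_{k=i}^{\min\{\ell,n\}}z_{k\ell j}$; $z_{i\ell j}+\pi_{i\ell}s_i-(u^U_i-\widehat u^j_i)\beta^U_{i\ell j}-(\widehat u^j_i-u^L_i)\beta^L_{i\ell j}-r_{i\ell j}\ge\pi_{i\ell}\widehat u^j_i$; $\left\|\begin{bmatrix}\pi_{i\ell}+\beta^L_{i\ell j}-\beta^U_{i\ell j}\\ r_{i\ell j}-\rho\end{bmatrix}\right\|_2\le r_{i\ell j}+\rho$; $\beta^L_{i\ell j}\ge0$, $\beta^U_{i\ell j}\ge0$; and $\rho\ge0$, $\mathbf s\in\mathcal S$.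
   Context: Notation: $[m]=\{1,\dots,m\}$, $[i,j]_{\mathbb Z}=\{i,\dots,j\}$. Schedules: $\mathcal S=\{\mathbf s\in\mathbb R^n:\mathbf s\ge0,\sum_is_i\le T\}$. For $\mathbf s\in\mathcal S,\mathbf u\in\mathbb R^n$, $f(\mathbf s,\mathbf u)$ is the optimal value of $\min_{\mathbf w\in\mathbb R^{n+1},\mathbf v\in\mathbb R^n}\sum_{i=1}^n(c_iw_i+d_iv_i)+Cw_{n+1}$ s.t. $w_i-v_{i-1}=u_{i-1}+w_{i-1}-s_{i-1}$ ($i\in[2,n+1]_{\mathbb Z}$), $\mathbf w\ge0$, $w_1=0$, $\mathbf v\ge0$. For $p\ge1$, $d_p(\mathbb Q_1,\mathbb Q_2)=(\inf_\Pi\mathbb E_\Pi\|\mathbf u_1-\mathbf u_2\|_p^p)^{1/p}$ over couplings $\Pi$ of $\mathbb Q_1,\mathbb Q_2$; $\widehat{\mathbb P}^N=\frac1N\sum_j\delta_{\widehat{\mathbf u}^j}$; $\mathcal D_p(\widehat{\mathbb P}^N,\epsilon)$ is the set of probability distributions $\mathbb Q$ on $\mathcal U$ with $d_p(\mathbb Q,\widehat{\mathbb P}^N)\le\epsilon$; W-DRAS is $\min_{\mathbf s\in\mathcal S}\sup_{\mathbb Q\in\mathcal D_p(\widehat{\mathbb P}^N,\epsilon)}\mathbb E_{\mathbb Q}[f(\mathbf s,\mathbf u)]$. The constants $\pi_{i\ell}$ are: for $i\in[n]$, $\pi_{i\ell}=-d_\ell+\sum_{q=i+1}^{\ell}c_q$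 if $\ell\in[i,n]_{\mathbb Z}$, and $\pi_{i,n+1}=C+\sum_{q=i+1}^nc_q$. *)

theory Defs
  imports "HOL-Probability.Probability"
begin

text \<open>Vectors in R^n are modelled as functions nat => real, indexed by 1..n and
  required to vanish outside 1..n. Empirical samples: uhat j for j in 1..N.\<close>

type_synonym vec = "nat \<Rightarrow> real"

definition box_set :: "nat \<Rightarrow> vec \<Rightarrow> vec \<Rightarrow> vec set" where
  "box_set n uL uU = {u. (\<forall>i\<in>{1..n}. uL i \<le> u i \<and> u i \<le> uU i) \<and> (\<forall>i. i \<notin> {1..n} \<longrightarrow> u i = 0)}"

definition schedules :: "nat \<Rightarrow> real \<Rightarrow> vec set" where
  "schedules n T = {s. (\<forall>i\<in>{1..n}. 0 \<le> s i) \<and> (\<Sum>i=1..n. s i) \<le> T \<and> (\<forall>i. i \<notin> {1..n} \<longrightarrow> s i = 0)}"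

definition fval :: "nat \<Rightarrow> vec \<Rightarrow> vec \<Rightarrow> real \<Rightarrow> vec \<Rightarrow> vec \<Rightarrow> real" where
  "fval n c d C s u = Inf {(\<Sum>i=1..n. c i * w i + d i * v i) + C * w (n+1) | w v.
      (\<forall>i\<in>{2..n+1}. w i - v (i-1) = u (i-1) + w (i-1) - s (i-1)) \<and>
      (\<forall>i\<in>{1..n+1}. 0 \<le> w i) \<and> w 1 = 0 \<and> (\<forall>i\<in>{1..n}. 0 \<le> v i)}"

definition couplings :: "vec measure \<Rightarrow> vec measure \<Rightarrow> (vec \<times> vec) measure set" where
  "couplings Q1 Q2 = {P. sets P = sets (borel \<Otimes>\<^sub>M borel) \<and> prob_space P \<and>
      distr P borel fst = Q1 \<and> distr P borel snd = Q2}"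

definition wass_pow :: "nat \<Rightarrow> nat \<Rightarrow> vec measure \<Rightarrow> vec measure \<Rightarrow> ennreal" where
  "wass_pow p n Q1 Q2 = (INF P\<in>couplings Q1 Q2.
      \<integral>\<^sup>+ x. ennreal (\<Sum>i=1..n. \<bar>fst x i - snd x i\<bar> ^ p) \<partial>P)"

definition empirical :: "nat \<Rightarrow> (nat \<Rightarrow> vec) \<Rightarrow> vec measure" where
  "empirical N uhat = distr (uniform_measure (count_space UNIV) {1..N}) borel uhat"

text \<open>Wasserstein ball D_p(P^N, eps) of distributions on U: d_p(Q,P^N) <= eps,
  equivalently d_p(Q,P^N)^p <= eps^p.\<close>
definition wball :: "nat \<Rightarrow> nat \<Rightarrow> vec \<Rightarrow> vec \<Rightarrow> nat \<Rightarrow> (nat \<Rightarrow> vec) \<Rightarrow> real \<Rightarrow> vec measure set" where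
  "wball p n uL uU N uhat \<epsilon> = {Q. sets Q = sets borel \<and> prob_space Q \<and>
      (AE u in Q. u \<in> box_set n uL uU) \<and>
      wass_pow p n Q (empirical N uhat) \<le> ennreal (\<epsilon> ^ p)}"

definition worst_exp :: "nat \<Rightarrow> vec \<Rightarrow> vec \<Rightarrow> real \<Rightarrow> nat \<Rightarrow> vec \<Rightarrow> vec \<Rightarrow> nat \<Rightarrow> (nat \<Rightarrow> vec) \<Rightarrow> real \<Rightarrow> vec \<Rightarrow> ereal" where
  "worst_exp n c d C p uL uU N uhat \<epsilon> s =
     (SUP Q\<in>wball p n uL uU N uhat \<epsilon>. enn2ereal (\<integral>\<^sup>+ u. ennreal (fval n c d C s u) \<partial>Q))"

definition dras_val :: "nat \<Rightarrow> vec \<Rightarrow> vec \<Rightarrow> real \<Rightarrow> real \<Rightarrow> nat \<Rightarrow> vec \<Rightarrow> vec \<Rightarrow> nat \<Rightarrow> (nat \<Rightarrow> vec) \<Rightarrow> real \<Rightarrow> ereal" where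
  "dras_val n c d C T p uL uU N uhat \<epsilon> =
     (INF s\<in>schedules n T. worst_exp n c d C p uL uU N uhat \<epsilon> s)"

definition dras_opt :: "nat \<Rightarrow> vec \<Rightarrow> vec \<Rightarrow> real \<Rightarrow> real \<Rightarrow> nat \<Rightarrow> vec \<Rightarrow> vec \<Rightarrow> nat \<Rightarrow> (nat \<Rightarrow> vec) \<Rightarrow> real \<Rightarrow> vec set" where
  "dras_opt n c d C T p uL uU N uhat \<epsilon> =
     {s\<in>schedules n T. worst_exp n c d C p uL uU N uhat \<epsilon> s = dras_val n c d C T p uL uU N uhat \<epsilon>}"

definition pic :: "nat \<Rightarrow> vec \<Rightarrow> vec \<Rightarrow> real \<Rightarrow> nat \<Rightarrow> nat \<Rightarrow> real" where
  "pic n c d C i l = (if l = n + 1 then C + (\<Sum>q=i+1..n. c q) else - d l + (\<Sum>q=i+1..l. c q))"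

definition lp1_feas :: "nat \<Rightarrow> vec \<Rightarrow> vec \<Rightarrow> real \<Rightarrow> real \<Rightarrow> vec \<Rightarrow> vec \<Rightarrow> nat \<Rightarrow> (nat \<Rightarrow> vec)
    \<Rightarrow> real \<Rightarrow> vec \<Rightarrow> (nat \<Rightarrow> nat \<Rightarrow> real) \<Rightarrow> (nat \<Rightarrow> nat \<Rightarrow> nat \<Rightarrow> real) \<Rightarrow> bool" where
  "lp1_feas n c d C T uL uU N uhat \<rho> s \<gamma> z \<longleftrightarrow>
     (\<forall>i\<in>{1..n}. \<forall>l\<in>{i..n+1}. \<forall>j\<in>{1..N}.
        (\<Sum>k=i..min l n. \<gamma> k j) \<ge> (\<Sum>k=i..min l n. z k l j) \<and>
        z i l j + pic n c d C i l * s i + \<bar>uL i - uhat j i\<bar> * \<rho> \<ge> pic n c d C i l * uL i \<and>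
        z i l j + pic n c d C i l * s i \<ge> pic n c d C i l * uhat j i \<and>
        z i l j + pic n c d C i l * s i + \<bar>uU i - uhat j i\<bar> * \<rho> \<ge> pic n c d C i l * uU i) \<and>
     0 \<le> \<rho> \<and> s \<in> schedules n T"

definition lp1_obj :: "nat \<Rightarrow> nat \<Rightarrow> real \<Rightarrow> real \<Rightarrow> (nat \<Rightarrow> nat \<Rightarrow> real) \<Rightarrow> real" where
  "lp1_obj n N \<epsilon> \<rho> \<gamma> = \<epsilon> * \<rho> + (1 / real N) * (\<Sum>j=1..N. \<Sum>i=1..n. \<gamma> i j)"

definition lp1_val :: "nat \<Rightarrow> vec \<Rightarrow> vec \<Rightarrow> real \<Rightarrow> real \<Rightarrow> vec \<Rightarrow> vec \<Rightarrow> nat \<Rightarrow> (nat \<Rightarrow> vec) \<Rightarrow> real \<Rightarrow> ereal" where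
  "lp1_val n c d C T uL uU N uhat \<epsilon> =
     (INF x\<in>{(\<rho>, s, \<gamma>, z). lp1_feas n c d C T uL uU N uhat \<rho> s \<gamma> z}.
        ereal (lp1_obj n N \<epsilon> (fst x) (fst (snd (snd x)))))"

definition lp1_opt :: "nat \<Rightarrow> vec \<Rightarrow> vec \<Rightarrow> real \<Rightarrow> real \<Rightarrow> vec \<Rightarrow> vec \<Rightarrow> nat \<Rightarrow> (nat \<Rightarrow> vec) \<Rightarrow> real \<Rightarrow> vec set" where
  "lp1_opt n c d C T uL uU N uhat \<epsilon> = {s. \<exists>\<rho> \<gamma> z. lp1_feas n c d C T uL uU N uhat \<rho> s \<gamma> z \<and>
      ereal (lp1_obj n N \<epsilon> \<rho> \<gamma>) = lp1_val n c d C T uL uU N uhat \<epsilon>}"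

definition socp_feas :: "nat \<Rightarrow> vec \<Rightarrow> vec \<Rightarrow> real \<Rightarrow> real \<Rightarrow> vec \<Rightarrow> vec \<Rightarrow> nat \<Rightarrow> (nat \<Rightarrow> vec)
    \<Rightarrow> real \<Rightarrow> vec \<Rightarrow> (nat \<Rightarrow> nat \<Rightarrow> real) \<Rightarrow> (nat \<Rightarrow> nat \<Rightarrow> nat \<Rightarrow> real)
    \<Rightarrow> (nat \<Rightarrow> nat \<Rightarrow> nat \<Rightarrow> real) \<Rightarrow> (nat \<Rightarrow> nat \<Rightarrow> nat \<Rightarrow> real) \<Rightarrow> (nat \<Rightarrow> nat \<Rightarrow> nat \<Rightarrow> real) \<Rightarrow> bool" where
  "socp_feas n c d C T uL uU N uhat \<rho> s \<gamma> z \<beta>L \<beta>U r \<longleftrightarrow>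
     (\<forall>i\<in>{1..n}. \<forall>l\<in>{i..n+1}. \<forall>j\<in>{1..N}.
        (\<Sum>k=i..min l n. \<gamma> k j) \<ge> (\<Sum>k=i..min l n. z k l j) \<and>
        z i l j + pic n c d C i l * s i - (uU i - uhat j i) * \<beta>U i l j
          - (uhat j i - uL i) * \<beta>L i l j - r i l j \<ge> pic n c d C i l * uhat j i \<and>
        sqrt ((pic n c d C i l + \<beta>L i l j - \<beta>U i l j)\<^sup>2 + (r i l j - \<rho>)\<^sup>2) \<le> r i l j + \<rho> \<and>
        0 \<le> \<beta>L i l j \<and> 0 \<le> \<beta>U i l j) \<and>
     0 \<le> \<rho> \<and> s \<in> schedules n T"

definition socp_obj :: "nat \<Rightarrow> nat \<Rightarrow> real \<Rightarrow> real \<Rightarrow> (nat \<Rightarrow> nat \<Rightarrow> real) \<Rightarrow> real" where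
  "socp_obj n N \<epsilon> \<rho> \<gamma> = \<epsilon>\<^sup>2 * \<rho> + (1 / real N) * (\<Sum>j=1..N. \<Sum>i=1..n. \<gamma> i j)"

definition socp_val :: "nat \<Rightarrow> vec \<Rightarrow> vec \<Rightarrow> real \<Rightarrow> real \<Rightarrow> vec \<Rightarrow> vec \<Rightarrow> nat \<Rightarrow> (nat \<Rightarrow> vec) \<Rightarrow> real \<Rightarrow> ereal" where
  "socp_val n c d C T uL uU N uhat \<epsilon> =
     (INF x\<in>{(\<rho>, s, \<gamma>, z, \<beta>L, \<beta>U, r). socp_feas n c d C T uL uU N uhat \<rho> s \<gamma> z \<beta>L \<beta>U r}.
        ereal (socp_obj n N \<epsilon> (fst x) (fst (snd (snd x)))))"

definition socp_opt :: "nat \<Rightarrow> vec \<Rightarrow> vec \<Rightarrow> real \<Rightarrow> real \<Rightarrow> vec \<Rightarrow> vec \<Rightarrow> nat \<Rightarrow> (nat \<Rightarrow> vec) \<Rightarrow> real \<Rightarrow> vec set" where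
  "socp_opt n c d C T uL uU N uhat \<epsilon> = {s. \<exists>\<rho> \<gamma> z \<beta>L \<beta>U r.
      socp_feas n c d C T uL uU N uhat \<rho> s \<gamma> z \<beta>L \<beta>U r \<and>
      ereal (socp_obj n N \<epsilon> \<rho> \<gamma>) = socp_val n c d C T uL uU N uhat \<epsilon>}"

end

theory Submission
  imports Defs
begin

function dpv :: "(nat \<Rightarrow> nat \<Rightarrow> real) \<Rightarrow> nat \<Rightarrow> nat \<Rightarrow> real" where
  "dpv a n i = (if n < i \<or> i = 0 then 0 else
     Max (set (map (\<lambda>l. (\<Sum>q=i..min l n. a q l) + dpv a n (Suc (min l n))) [i..<n+2])))"
  by pat_completeness auto
termination by (relation "Wellfounded.measure (\<lambda>(a,n,i). Suc n - i)") auto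

declare dpv.simps[simp del]

lemma dpv_eq: assumes "1 \<le> i" "i \<le> n" shows "dpv a n i =
   Max ((\<lambda>l. (\<Sum>q=i..min l n. a q l) + dpv a n (Suc (min l n))) ` {i..n+1})"
proof -
  have e: "{i..<n+2} = {i..n+1}" by auto
  show ?thesis by (subst dpv.simps) (simp only: set_map set_upt e, use assms in simp)
qed

lemma dpv_out: "n < i \<Longrightarrow> dpv a n i = 0"
  by (subst dpv.simps) simp

lemma sum_split_at:
  fixes f :: "nat \<Rightarrow> 'a::comm_monoid_add"
  assumes "m \<le> Suc k" "k \<le> n"
  shows "sum f {m..n} = sum f {m..k} + sum f {Suc k..n}"
proof -
  have "{m..n} = {m..k} \<union> {Suc k..n}" using assms by auto
  then show ?thesis by (simp add: sum.union_disjoint)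
qed

lemma back_induct[consumes 1]:
  fixes N :: nat
  assumes "m \<le> N"
  and step: "\<And>m. m \<le> N \<Longrightarrow> (\<And>m'. m < m' \<Longrightarrow> m' \<le> N \<Longrightarrow> P m') \<Longrightarrow> P m"
  shows "P m"
  using assms(1)
proof (induction "N - m" arbitrary: m rule: less_induct)
  case (less m)
  show ?case
  proof (rule step[OF less.prems])
    fix m' assume "m < m'" "m' \<le> N"
    then show "P m'" using less.hyps[of m'] by auto
  qed
qed

lemma sumid:
  fixes c x :: "nat \<Rightarrow> real"
  shows "(\<Sum>q=m..L. (K + (\<Sum>r=Suc q..L. c r)) * x q) =
         K * (\<Sum>q=m..L. x q) + (\<Sum>r=m..L. c r * (\<Sum>q=m..<r. x q))"
proof (induction L arbitrary: K)
  case 0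
  then show ?case by (cases m) auto
next
  case (Suc L)
  show ?case
  proof (cases "m \<le> Suc L")
    case False then show ?thesis by simp
  next
    case True
    have e1: "(\<Sum>q=m..Suc L. (K + (\<Sum>r=Suc q..Suc L. c r)) * x q)
       = (\<Sum>q=m..L. (K + c (Suc L) + (\<Sum>r=Suc q..L. c r)) * x q) + K * x (Suc L)"
    proof -
      have "(\<Sum>q=m..Suc L. (K + (\<Sum>r=Suc q..Suc L. c r)) * x q)
          = (\<Sum>q=m..L. (K + (\<Sum>r=Suc q..Suc L. c r)) * x q) + (K + (\<Sum>r=Suc (Suc L)..Suc L. c r)) * x (Suc L)"
        using True by (simp add: sum.atLeast_Suc_atMost_Suc_shift del: sum.cl_ivl_Suc) (simp add: sum.cl_ivl_Suc)
      also have "\<dots> = (\<Sum>q=m..L. (K + c (Suc L) + (\<Sum>r=Suc q..L. c r)) * x q) + K * x (Suc L)"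
      proof -
        have "\<And>q. q \<in> {m..L} \<Longrightarrow> (\<Sum>r=Suc q..Suc L. c r) = c (Suc L) + (\<Sum>r=Suc q..L. c r)"
          by (simp add: sum.cl_ivl_Suc)
        then show ?thesis by (intro arg_cong2[where f="(+)"] sum.cong) auto
      qed
      finally show ?thesis .
    qed
    have e2: "(\<Sum>q=m..L. (K + c (Suc L) + (\<Sum>r=Suc q..L. c r)) * x q)
       = (K + c (Suc L)) * (\<Sum>q=m..L. x q) + (\<Sum>r=m..L. c r * (\<Sum>q=m..<r. x q))"
      using Suc.IH[of "K + c (Suc L)"] by simp
    have e3: "(\<Sum>q=m..<Suc L. x q) = (\<Sum>q=m..L. x q)"
      by (simp add: atLeastLessThanSuc_atLeastAtMost)
    have nl: "\<not> Suc L < m" using True by simp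
    have e4: "(\<Sum>r=m..Suc L. c r * (\<Sum>q=m..<r. x q)) = (\<Sum>r=m..L. c r * (\<Sum>q=m..<r. x q)) + c (Suc L) * (\<Sum>q=m..L. x q)"
      by (simp only: sum.cl_ivl_Suc nl if_False e3)
    have e5: "(\<Sum>q=m..Suc L. x q) = (\<Sum>q=m..L. x q) + x (Suc L)"
      by (simp only: sum.cl_ivl_Suc nl if_False)
    show ?thesis
      unfolding e1 e2 e4 e5 by (simp add: algebra_simps)
  qed
qed

lemma telesc:
  fixes c d :: "nat \<Rightarrow> real"
  assumes "\<forall>i\<in>{1..n-1}. d (i+1) - d i \<le> c (i+1)"
  shows "1 \<le> q \<Longrightarrow> q \<le> L \<Longrightarrow> L \<le> n \<Longrightarrow> d L - d q \<le> (\<Sum>r=Suc q..L. c r)"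
proof (induction L)
  case 0 then show ?case by simp
next
  case (Suc L)
  show ?case
  proof (cases "q = Suc L")
    case True then show ?thesis by simp
  next
    case False
    then have "q \<le> L" using Suc by simp
    then have ih: "d L - d q \<le> (\<Sum>r=Suc q..L. c r)" using Suc by simp
    have "d (L+1) - d L \<le> c (L+1)" using assms Suc \<open>q \<le> L\<close> by auto
    then show ?thesis using ih \<open>q \<le> L\<close> by (simp add: sum.cl_ivl_Suc)
  qed
qed

lemma dpv_ge:
  assumes "1 \<le> m" "m \<le> n" "l \<in> {m..n+1}"
  shows "(\<Sum>q=m..min l n. a q l) + dpv a n (Suc (min l n)) \<le> dpv a n m"
  unfolding dpv_eq[OF assms(1,2)] by (rule Max_ge) (use assms(3) in auto)

lemma dpv_ex:
  assumes "1 \<le> m" "m \<le> n"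
  shows "\<exists>l\<in>{m..n+1}. dpv a n m = (\<Sum>q=m..min l n. a q l) + dpv a n (Suc (min l n))"
proof -
  have "dpv a n m \<in> (\<lambda>l. (\<Sum>q=m..min l n. a q l) + dpv a n (Suc (min l n))) ` {m..n+1}"
    unfolding dpv_eq[OF assms(1,2)] by (rule Max_in) (use assms in auto)
  then show ?thesis by auto
qed

lemma dpv_tel:
  assumes "m \<le> Suc L"
  shows "(\<Sum>k=m..L. dpv a n k - dpv a n (Suc k)) = dpv a n m - dpv a n (Suc L)"
  using assms
proof (induction L)
  case 0 then show ?case by (cases m) auto
next
  case (Suc L)
  then show ?case by (cases "m = Suc (Suc L)") (auto simp: sum.cl_ivl_Suc)
qed

lemma dpv_cong:
  assumes "\<forall>q\<in>{m..n}. \<forall>l\<in>{q..n+1}. a q l = b q l" "1 \<le> m"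
  shows "dpv a n m = dpv b n m"
proof -
  have "m \<le> n+1 \<Longrightarrow> 1 \<le> m \<Longrightarrow> (\<forall>q\<in>{m..n}. \<forall>l\<in>{q..n+1}. a q l = b q l) \<longrightarrow> dpv a n m = dpv b n m"
  proof (induction m rule: back_induct[where N="n+1"])
    case (1 m)
    show ?case
    proof (cases "m \<le> n")
      case False then show ?thesis by (simp add: dpv_out)
    next
      case True
      show ?thesis
      proof
        assume H: "\<forall>q\<in>{m..n}. \<forall>l\<in>{q..n+1}. a q l = b q l"
        have "\<And>l. l \<in> {m..n+1} \<Longrightarrow> (\<Sum>q=m..min l n. a q l) + dpv a n (Suc (min l n)) =
            (\<Sum>q=m..min l n. b q l) + dpv b n (Suc (min l n))"
        proof -
          fix l assume l: "l \<in> {m..n+1}"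
          have "(\<Sum>q=m..min l n. a q l) = (\<Sum>q=m..min l n. b q l)"
            using H l by (intro sum.cong) auto
          moreover have "dpv a n (Suc (min l n)) = dpv b n (Suc (min l n))"
            using 1(2)[of "Suc (min l n)"] H l 1 True by auto
          ultimately show "(\<Sum>q=m..min l n. a q l) + dpv a n (Suc (min l n)) =
            (\<Sum>q=m..min l n. b q l) + dpv b n (Suc (min l n))" by simp
        qed
        then show "dpv a n m = dpv b n m"
          unfolding dpv_eq[OF 1(3) True] by (intro arg_cong[where f=Max] image_cong) auto
      qed
    qed
  qed
  then show ?thesis using assms by (cases "m \<le> n+1") (auto simp: dpv_out)
qed

lemma dpv_mono:
  assumes "\<forall>q\<in>{m..n}. \<forall>l\<in>{q..n+1}. a q l \<le> b q l" "1 \<le> m"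
  shows "dpv a n m \<le> dpv b n m"
proof -
  have "m \<le> n+1 \<Longrightarrow> 1 \<le> m \<Longrightarrow> (\<forall>q\<in>{m..n}. \<forall>l\<in>{q..n+1}. a q l \<le> b q l) \<longrightarrow> dpv a n m \<le> dpv b n m"
  proof (induction m rule: back_induct[where N="n+1"])
    case (1 m)
    show ?case
    proof (cases "m \<le> n")
      case False then show ?thesis by (simp add: dpv_out)
    next
      case True
      show ?thesis
      proof
        assume H: "\<forall>q\<in>{m..n}. \<forall>l\<in>{q..n+1}. a q l \<le> b q l"
        obtain l where l: "l \<in> {m..n+1}" and eq: "dpv a n m = (\<Sum>q=m..min l n. a q l) + dpv a n (Suc (min l n))"
          using dpv_ex[OF 1(3) True] by blast
        have "(\<Sum>q=m..min l n. a q l) \<le> (\<Sum>q=m..min l n. b q l)"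
          using H l by (intro sum_mono) auto
        moreover have "dpv a n (Suc (min l n)) \<le> dpv b n (Suc (min l n))"
          using 1(2)[of "Suc (min l n)"] H l 1 True by auto
        ultimately have "dpv a n m \<le> (\<Sum>q=m..min l n. b q l) + dpv b n (Suc (min l n))"
          unfolding eq by simp
        also have "\<dots> \<le> dpv b n m" by (rule dpv_ge[OF 1(3) True l])
        finally show "dpv a n m \<le> dpv b n m" .
      qed
    qed
  qed
  then show ?thesis using assms by (cases "m \<le> n+1") (auto simp: dpv_out)
qed

lemma dpv_shift:
  assumes "1 \<le> m"
  shows "dpv (\<lambda>q l. a q l - e q) n m = dpv a n m - (\<Sum>q=m..n. e q)"
proof -
  have "m \<le> n+1 \<Longrightarrow> 1 \<le> m \<Longrightarrow> dpv (\<lambda>q l. a q l - e q) n m = dpv a n m - (\<Sum>q=m..n. e q)"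
  proof (induction m rule: back_induct[where N="n+1"])
    case (1 m)
    show ?case
    proof (cases "m \<le> n")
      case False then show ?thesis by (simp add: dpv_out)
    next
      case True
      have "\<And>l. l \<in> {m..n+1} \<Longrightarrow> (\<Sum>q=m..min l n. a q l - e q) + dpv (\<lambda>q l. a q l - e q) n (Suc (min l n)) =
            ((\<Sum>q=m..min l n. a q l) + dpv a n (Suc (min l n))) - (\<Sum>q=m..n. e q)"
      proof -
        fix l assume l: "l \<in> {m..n+1}"
        have ih: "dpv (\<lambda>q l. a q l - e q) n (Suc (min l n)) = dpv a n (Suc (min l n)) - (\<Sum>q=Suc (min l n)..n. e q)"
          using 1(2)[of "Suc (min l n)"] l 1 True by auto
        have sp: "(\<Sum>q=m..n. e q) = (\<Sum>q=m..min l n. e q) + (\<Sum>q=Suc (min l n)..n. e q)"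
          using l by (intro sum_split_at) auto
        show "(\<Sum>q=m..min l n. a q l - e q) + dpv (\<lambda>q l. a q l - e q) n (Suc (min l n)) =
            ((\<Sum>q=m..min l n. a q l) + dpv a n (Suc (min l n))) - (\<Sum>q=m..n. e q)"
          unfolding ih sp sum_subtractf by simp
      qed
      then have "dpv (\<lambda>q l. a q l - e q) n m = Max ((\<lambda>v. v - (\<Sum>q=m..n. e q)) ` ((\<lambda>l. (\<Sum>q=m..min l n. a q l) + dpv a n (Suc (min l n))) ` {m..n+1}))"
        unfolding dpv_eq[OF 1(3) True] image_image by (intro arg_cong[where f=Max] image_cong) auto
      also have "\<dots> = Max ((\<lambda>l. (\<Sum>q=m..min l n. a q l) + dpv a n (Suc (min l n))) ` {m..n+1}) - (\<Sum>q=m..n. e q)"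
        by (rule mono_Max_commute[symmetric]) (use True in \<open>auto simp: mono_def\<close>)
      finally show ?thesis unfolding dpv_eq[OF 1(3) True] .
    qed
  qed
  then show ?thesis using assms by (cases "m \<le> n+1") (auto simp: dpv_out)
qed

primrec wr :: "(nat \<Rightarrow> real) \<Rightarrow> nat \<Rightarrow> real" where
  "wr x 0 = 0"
| "wr x (Suc i) = (if i = 0 then 0 else max 0 (wr x i + x i))"

definition fset :: "nat \<Rightarrow> vec \<Rightarrow> vec \<Rightarrow> real \<Rightarrow> vec \<Rightarrow> vec \<Rightarrow> real set" where
  "fset n c d C s u = {(\<Sum>i=1..n. c i * w i + d i * v i) + C * w (n+1) | w v.
      (\<forall>i\<in>{2..n+1}. w i - v (i-1) = u (i-1) + w (i-1) - s (i-1)) \<and>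
      (\<forall>i\<in>{1..n+1}. 0 \<le> w i) \<and> w 1 = 0 \<and> (\<forall>i\<in>{1..n}. 0 \<le> v i)}"

lemma fval_fset: "fval n c d C s u = Inf (fset n c d C s u)"
  unfolding fval_def fset_def ..

lemma wr_nonneg: "0 \<le> wr x i"
  by (cases i) auto

lemma wr_Suc: "1 \<le> i \<Longrightarrow> wr x (Suc i) = max 0 (wr x i + x i)"
  by simp

lemma fset_bdd:
  assumes "\<forall>i\<in>{1..n}. 0 \<le> c i" "\<forall>i\<in>{1..n}. 0 \<le> d i" "0 \<le> C"
  shows "bdd_below (fset n c d C s u)"
proof -
  have "\<forall>y\<in>fset n c d C s u. 0 \<le> y"
    unfolding fset_def using assms
    by (auto intro!: add_nonneg_nonneg sum_nonneg mult_nonneg_nonneg)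
  then show ?thesis by (auto simp: bdd_below_def)
qed

lemma wr_in_fset:
  fixes u s :: vec
  assumes "\<forall>i\<in>{1..n}. 0 \<le> c i" "\<forall>i\<in>{1..n}. 0 \<le> d i" "0 \<le> C"
  defines "x \<equiv> (\<lambda>q. u q - s q)"
  shows "(\<Sum>i=1..n. c i * wr x i + d i * (wr x (Suc i) - wr x i - x i)) + C * wr x (n+1) \<in> fset n c d C s u"
proof -
  have "\<forall>i\<in>{2..n+1}. wr x i - (wr x (Suc (i-1)) - wr x (i-1) - x (i-1)) = u (i-1) + wr x (i-1) - s (i-1)"
    by (auto simp: x_def)
  moreover have "\<forall>i\<in>{1..n}. 0 \<le> wr x (Suc i) - wr x i - x i"
    by auto
  ultimately show ?thesis unfolding fset_def
    by (intro CollectI exI[of _ "wr x"] exI[of _ "\<lambda>i. wr x (Suc i) - wr x i - x i"]) (auto simp: wr_nonneg)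
qed

lemma fval_upper:
  fixes g :: "nat \<Rightarrow> real"
  assumes c0: "\<forall>i\<in>{1..n}. 0 \<le> c i" and d0: "\<forall>i\<in>{1..n}. 0 \<le> d i" and C0: "0 \<le> C"
  and HB: "\<forall>m\<in>{1..n}. \<forall>l\<in>{m..n+1}.
     (\<Sum>q=m..min l n. pic n c d C q l * (u q - s q)) \<le> (\<Sum>q=m..min l n. g q)"
  shows "fval n c d C s u \<le> (\<Sum>q=1..n. g q)"
proof -
  define x where "x = (\<lambda>q. u q - s q)"
  define W where "W = wr x"
  define V where "V = (\<lambda>i. W (Suc i) - W i - x i)"
  define TC where "TC = (\<lambda>i. (\<Sum>k=i..n. c k * W k + d k * V k) + C * W (n+1))"
  define Tt where "Tt = (\<lambda>m. (\<Sum>k=m..n. g k))"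
  have claim: "1 \<le> i \<longrightarrow> (\<forall>m. 1 \<le> m \<and> m \<le> i \<and> (\<forall>r\<in>{m..i}. W r = (\<Sum>q=m..<r. x q)) \<longrightarrow>
      TC i + (\<Sum>r=m..<i. c r * W r) \<le> Tt m)" if "i \<le> n+1" for i
    using that
  proof (induction i rule: back_induct)
    case (1 i)
    show ?case
    proof (intro impI allI)
      fix m assume i1: "1 \<le> i" and H: "1 \<le> m \<and> m \<le> i \<and> (\<forall>r\<in>{m..i}. W r = (\<Sum>q=m..<r. x q))"
      show "TC i + (\<Sum>r=m..<i. c r * W r) \<le> Tt m"
      proof (cases "i = n+1")
        case True
        have Wn: "W (n+1) = (\<Sum>q=m..n. x q)"
          using H True by (auto simp: atLeastLessThanSuc_atLeastAtMost)
        have cs0: "(\<Sum>r=m..<i. c r * W r) = (\<Sum>r=m..n. c r * W r)"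
          using True by (simp add: atLeastLessThanSuc_atLeastAtMost)
        have cs: "(\<Sum>r=m..<i. c r * W r) = (\<Sum>r=m..n. c r * (\<Sum>q=m..<r. x q))"
        proof -
          have "\<forall>r\<in>{m..n}. W r = (\<Sum>q=m..<r. x q)" using H True by auto
          then have "(\<Sum>r=m..n. c r * W r) = (\<Sum>r=m..n. c r * (\<Sum>q=m..<r. x q))"
            by (intro sum.cong[OF refl]) simp
          then show ?thesis using cs0 by simp
        qed
        have "TC i + (\<Sum>r=m..<i. c r * W r) = C * (\<Sum>q=m..n. x q) + (\<Sum>r=m..n. c r * (\<Sum>q=m..<r. x q))"
        proof -
          have "TC i = C * W (n+1)" unfolding TC_def True by simp
          then show ?thesis unfolding cs Wn by simp
        qed
        also have "\<dots> = (\<Sum>q=m..n. (C + (\<Sum>r=Suc q..n. c r)) * x q)"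
          by (rule sumid[symmetric])
        also have "\<dots> \<le> Tt m"
        proof (cases "m \<le> n")
          case True
          have "(\<Sum>q=m..min (n+1) n. pic n c d C q (n+1) * (u q - s q)) \<le> (\<Sum>q=m..min (n+1) n. g q)"
            using HB[rule_format, of m "n+1"] True H by simp
          then show ?thesis by (simp add: pic_def x_def Tt_def)
        next
          case False then show ?thesis by (simp add: Tt_def)
        qed
        finally show ?thesis .
      next
        case False
        then have iln: "i \<le> n" using 1 by simp
        have Wi: "W i = (\<Sum>q=m..<i. x q)" using H by auto
        have TCi: "TC i = c i * W i + d i * V i + TC (Suc i)"
          unfolding TC_def using iln by (simp add: sum.atLeast_Suc_atMost)
        show ?thesis
        proof (cases "0 \<le> W i + x i")
          case True
          have WS: "W (Suc i) = W i + x i" using True i1 by (simp add: W_def)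
          have VS: "V i = 0" unfolding V_def WS by simp
          have H': "\<forall>r\<in>{m..Suc i}. W r = (\<Sum>q=m..<r. x q)"
          proof
            fix r assume "r \<in> {m..Suc i}"
            then consider "r \<in> {m..i}" | "r = Suc i" by fastforce
            then show "W r = (\<Sum>q=m..<r. x q)"
            proof cases
              case 1 then show ?thesis using H by auto
            next
              case 2 then show ?thesis using WS Wi H by simp
            qed
          qed
          have ih: "TC (Suc i) + (\<Sum>r=m..<Suc i. c r * W r) \<le> Tt m"
            using 1(2)[of "Suc i"] iln H H' by auto
          have "TC i + (\<Sum>r=m..<i. c r * W r) = TC (Suc i) + (\<Sum>r=m..<Suc i. c r * W r)"
            unfolding TCi VS using H by (simp add: sum.atLeastLessThan_Suc)
          then show ?thesis using ih by simp
        next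
          case False
          have WS: "W (Suc i) = 0" using False i1 by (simp add: W_def)
          have VS: "V i = - (\<Sum>q=m..i. x q)"
            unfolding V_def WS Wi using H by (simp add: atLeastLessThanSuc_atLeastAtMost[symmetric] sum.atLeastLessThan_Suc)
          have ih: "TC (Suc i) \<le> Tt (Suc i)"
            using 1(2)[of "Suc i"] iln WS by auto
          have cs: "(\<Sum>r=m..<i. c r * W r) + c i * W i = (\<Sum>r=m..i. c r * (\<Sum>q=m..<r. x q))"
            using H by (simp add: atLeastLessThanSuc_atLeastAtMost[symmetric] sum.atLeastLessThan_Suc)
          have "TC i + (\<Sum>r=m..<i. c r * W r) = (- d i) * (\<Sum>q=m..i. x q) + (\<Sum>r=m..i. c r * (\<Sum>q=m..<r. x q)) + TC (Suc i)"
            unfolding TCi VS using cs by (simp add: algebra_simps)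
          also have "(- d i) * (\<Sum>q=m..i. x q) + (\<Sum>r=m..i. c r * (\<Sum>q=m..<r. x q)) = (\<Sum>q=m..i. (- d i + (\<Sum>r=Suc q..i. c r)) * x q)"
            by (rule sumid[symmetric])
          also have "\<dots> \<le> (\<Sum>q=m..i. g q)"
          proof -
            have "m \<le> n" using H iln by simp
            then have "(\<Sum>q=m..min i n. pic n c d C q i * (u q - s q)) \<le> (\<Sum>q=m..min i n. g q)"
              using HB[rule_format, of m i] H iln by simp
            then show ?thesis using iln by (simp add: pic_def x_def)
          qed
          finally show ?thesis
            using ih H iln unfolding Tt_def by (simp add: sum_split_at[of m i n])
        qed
      qed
    qed
  qed
  have "TC 1 \<le> Tt 1"
    using claim[of 1] by (auto simp: W_def)
  moreover have "fval n c d C s u \<le> TC 1"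
  proof -
    have "TC 1 \<in> fset n c d C s u"
      using wr_in_fset[OF c0 d0 C0, of u s] unfolding TC_def V_def W_def x_def by simp
    then show ?thesis unfolding fval_fset using fset_bdd[OF c0 d0 C0] by (simp add: cInf_lower)
  qed
  ultimately show ?thesis unfolding Tt_def by simp
qed

lemma blockcalc:
  fixes w v x c :: "nat \<Rightarrow> real"
  assumes hx: "\<forall>q\<in>{i..L}. x q = w (Suc q) - w q - v q" and iL: "i \<le> L"
  shows "(\<Sum>q=i..L. (K + (\<Sum>r=Suc q..L. c r)) * x q) =
     K * (w (Suc L) - w i - (\<Sum>q=i..L. v q)) + (\<Sum>r=i..L. c r * w r) - w i * (\<Sum>r=i..L. c r)
     - (\<Sum>q=i..L. (\<Sum>r=Suc q..L. c r) * v q)"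
proof -
  have sx: "(\<Sum>q=i..L. x q) = w (Suc L) - w i - (\<Sum>q=i..L. v q)"
  proof -
    have "(\<Sum>q=i..L. x q) = (\<Sum>q=i..L. (w (Suc q) - w q) - v q)"
      using hx by (intro sum.cong) auto
    also have "\<dots> = (w (Suc L) - w i) - (\<Sum>q=i..L. v q)"
      using sum_subtractf[of "\<lambda>q. w (Suc q) - w q" v "{i..L}"] sum_Suc_diff[of i L w] iL by simp
    finally show ?thesis by simp
  qed
  have sr: "\<And>r. r \<in> {i..L} \<Longrightarrow> (\<Sum>q=i..<r. x q) = w r - w i - (\<Sum>q=i..<r. v q)"
  proof -
    fix r assume r: "r \<in> {i..L}"
    have "(\<Sum>q=i..<r. x q) = (\<Sum>q=i..<r. (w (Suc q) - w q) - v q)"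
      using hx r by (intro sum.cong) auto
    also have "\<dots> = (w r - w i) - (\<Sum>q=i..<r. v q)"
      using sum_subtractf[of "\<lambda>q. w (Suc q) - w q" v "{i..<r}"] sum_Suc_diff'[of i r w] r by simp
    finally show "(\<Sum>q=i..<r. x q) = w r - w i - (\<Sum>q=i..<r. v q)" .
  qed
  have "(\<Sum>r=i..L. c r * (\<Sum>q=i..<r. x q)) = (\<Sum>r=i..L. c r * w r - w i * c r - c r * (\<Sum>q=i..<r. v q))"
  proof (rule sum.cong[OF refl])
    fix r assume r: "r \<in> {i..L}"
    show "c r * (\<Sum>q=i..<r. x q) = c r * w r - w i * c r - c r * (\<Sum>q=i..<r. v q)"
      unfolding sr[OF r] by (simp add: algebra_simps)
  qed
  also have "\<dots> = (\<Sum>r=i..L. c r * w r) - w i * (\<Sum>r=i..L. c r) - (\<Sum>r=i..L. c r * (\<Sum>q=i..<r. v q))"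
    by (simp add: sum_subtractf sum_distrib_left)
  also have "(\<Sum>r=i..L. c r * (\<Sum>q=i..<r. v q)) = (\<Sum>q=i..L. (\<Sum>r=Suc q..L. c r) * v q)"
    using sumid[of 0 c L v i] by simp
  finally have cs: "(\<Sum>r=i..L. c r * (\<Sum>q=i..<r. x q)) = (\<Sum>r=i..L. c r * w r) - w i * (\<Sum>r=i..L. c r) - (\<Sum>q=i..L. (\<Sum>r=Suc q..L. c r) * v q)" .
  show ?thesis unfolding sumid sx cs by simp
qed

lemma BI1:
  fixes w v x c d :: "nat \<Rightarrow> real"
  assumes hx: "\<forall>q\<in>{i..L}. x q = w (Suc q) - w q - v q"
  and i1: "1 \<le> i" and iL: "i \<le> L" and Ln: "L \<le> n"
  and w1: "i = 1 \<longrightarrow> w i = 0" and wi: "0 \<le> w i" and v0: "\<forall>q\<in>{i..L}. 0 \<le> v q"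
  and tel: "\<forall>i\<in>{1..n-1}. d (i+1) - d i \<le> c (i+1)"
  shows "(\<Sum>q=i..L. (- d L + (\<Sum>r=Suc q..L. c r)) * x q) - d (i-1) * w i + d L * w (Suc L)
     \<le> (\<Sum>k=i..L. c k * w k + d k * v k)"
proof -
  define A where "A = (\<Sum>q=i..L. v q)"
  define B where "B = (\<Sum>r=i..L. c r)"
  define Cw where "Cw = (\<Sum>r=i..L. c r * w r)"
  define Dv where "Dv = (\<Sum>r=i..L. d r * v r)"
  define E where "E = (\<Sum>q=i..L. (\<Sum>r=Suc q..L. c r) * v q)"
  have l1: "(\<Sum>q=i..L. (- d L + (\<Sum>r=Suc q..L. c r)) * x q) = - d L * (w (Suc L) - w i - A) + Cw - w i * B - E"
    unfolding A_def Cw_def B_def E_def by (rule blockcalc[OF hx iL])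
  have r1: "(\<Sum>k=i..L. c k * w k + d k * v k) = Cw + Dv"
    unfolding Cw_def Dv_def by (simp add: sum.distrib)
  have s1: "Dv - d L * A + E = (\<Sum>q=i..L. v q * (d q - d L + (\<Sum>r=Suc q..L. c r)))"
    unfolding Dv_def A_def E_def by (simp add: sum_distrib_left sum_subtractf sum.distrib algebra_simps)
  have s1nn: "0 \<le> (\<Sum>q=i..L. v q * (d q - d L + (\<Sum>r=Suc q..L. c r)))"
  proof (rule sum_nonneg)
    fix q assume q: "q \<in> {i..L}"
    have "d L - d q \<le> (\<Sum>r=Suc q..L. c r)" using telesc[OF tel, of q L] q i1 Ln by auto
    then show "0 \<le> v q * (d q - d L + (\<Sum>r=Suc q..L. c r))" using v0 q by simp
  qed
  have s2: "0 \<le> w i * (d (i-1) - d L + B)"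
  proof (cases "i = 1")
    case True then show ?thesis using w1 by simp
  next
    case False
    have "d L - d (i-1) \<le> (\<Sum>r=Suc (i-1)..L. c r)" using telesc[OF tel, of "i-1" L] False i1 iL Ln by auto
    then have "0 \<le> d (i-1) - d L + B" unfolding B_def using False i1 by simp
    then show ?thesis using wi by simp
  qed
  show ?thesis unfolding l1 r1 using s1 s1nn s2 by (simp add: algebra_simps)
qed

lemma BI2:
  fixes w v x c d :: "nat \<Rightarrow> real"
  assumes hx: "\<forall>q\<in>{i..n}. x q = w (Suc q) - w q - v q"
  and i1: "1 \<le> i" and iL: "i \<le> n"
  and w1: "i = 1 \<longrightarrow> w i = 0" and wi: "0 \<le> w i" and v0: "\<forall>q\<in>{i..n}. 0 \<le> v q"
  and c0: "\<forall>i\<in>{1..n}. 0 \<le> c i" and d0: "\<forall>i\<in>{1..n}. 0 \<le> d i" and C0: "0 \<le> C"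
  shows "(\<Sum>q=i..n. (C + (\<Sum>r=Suc q..n. c r)) * x q) - d (i-1) * w i
     \<le> (\<Sum>k=i..n. c k * w k + d k * v k) + C * w (Suc n)"
proof -
  define A where "A = (\<Sum>q=i..n. v q)"
  define B where "B = (\<Sum>r=i..n. c r)"
  define Cw where "Cw = (\<Sum>r=i..n. c r * w r)"
  define Dv where "Dv = (\<Sum>r=i..n. d r * v r)"
  define E where "E = (\<Sum>q=i..n. (\<Sum>r=Suc q..n. c r) * v q)"
  have l1: "(\<Sum>q=i..n. (C + (\<Sum>r=Suc q..n. c r)) * x q) = C * (w (Suc n) - w i - A) + Cw - w i * B - E"
    unfolding A_def Cw_def B_def E_def by (rule blockcalc[OF hx iL])
  have r1: "(\<Sum>k=i..n. c k * w k + d k * v k) = Cw + Dv"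
    unfolding Cw_def Dv_def by (simp add: sum.distrib)
  have A0: "0 \<le> A" unfolding A_def using v0 by (intro sum_nonneg) auto
  have B0: "0 \<le> B" unfolding B_def using c0 i1 by (intro sum_nonneg) auto
  have D0: "0 \<le> Dv" unfolding Dv_def using v0 d0 i1 by (intro sum_nonneg) auto
  have E0: "0 \<le> E" unfolding E_def using v0 c0 i1
    by (intro sum_nonneg mult_nonneg_nonneg) (auto intro!: sum_nonneg)
  have s2: "0 \<le> d (i-1) * w i"
  proof (cases "i = 1")
    case True then show ?thesis using w1 by simp
  next
    case False
    then have "i - 1 \<in> {1..n}" using i1 iL by auto
    then have "0 \<le> d (i-1)" using d0 by blast
    then show ?thesis using wi by simp
  qed
  have "0 \<le> C * w i + C * A + w i * B" using C0 wi A0 B0 by simp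
  then show ?thesis unfolding l1 r1 using s2 D0 E0 by (simp add: algebra_simps)
qed

lemma fval_lower:
  assumes n1: "1 \<le> n" and c0: "\<forall>i\<in>{1..n}. 0 \<le> c i" and d0: "\<forall>i\<in>{1..n}. 0 \<le> d i" and C0: "0 \<le> C"
  and tel: "\<forall>i\<in>{1..n-1}. d (i+1) - d i \<le> c (i+1)"
  shows "dpv (\<lambda>q l. pic n c d C q l * (u q - s q)) n 1 \<le> fval n c d C s u"
  unfolding fval_fset
proof (rule cInf_greatest)
  show "fset n c d C s u \<noteq> {}" using wr_in_fset[OF c0 d0 C0, of u s] by blast
next
  fix y assume "y \<in> fset n c d C s u"
  then obtain w v where y: "y = (\<Sum>i=1..n. c i * w i + d i * v i) + C * w (n+1)"
    and cw: "\<forall>i\<in>{2..n+1}. w i - v (i-1) = u (i-1) + w (i-1) - s (i-1)"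
    and w0: "\<forall>i\<in>{1..n+1}. 0 \<le> w i" and w1: "w 1 = 0" and v0: "\<forall>i\<in>{1..n}. 0 \<le> v i"
    unfolding fset_def by blast
  define a where "a = (\<lambda>q l. pic n c d C q l * (u q - s q))"
  define x where "x = (\<lambda>q. u q - s q)"
  have hx: "\<forall>q\<in>{1..n}. x q = w (Suc q) - w q - v q"
  proof
    fix q assume q: "q \<in> {1..n}"
    then have "Suc q \<in> {2..n+1}" by auto
    then show "x q = w (Suc q) - w q - v q" using cw unfolding x_def by fastforce
  qed
  define TC where "TC = (\<lambda>i. (\<Sum>k=i..n. c k * w k + d k * v k) + C * w (Suc n))"
  have claim: "1 \<le> i \<longrightarrow> dpv a n i - d (i-1) * w i \<le> TC i" if "i \<le> n+1" for i
    using that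
  proof (induction i rule: back_induct)
    case (1 i)
    show ?case
    proof
      assume i1: "1 \<le> i"
      show "dpv a n i - d (i-1) * w i \<le> TC i"
      proof (cases "i \<le> n")
        case False
        then have ie: "i = n+1" using 1 by simp
        have "0 \<le> C * w (Suc n)" using C0 w0 by simp
        moreover have "0 \<le> d n * w (Suc n)" using d0 w0 n1 by simp
        ultimately show ?thesis unfolding TC_def ie by (simp add: dpv_out)
      next
        case True
        obtain l where l: "l \<in> {i..n+1}" and eq: "dpv a n i = (\<Sum>q=i..min l n. a q l) + dpv a n (Suc (min l n))"
          using dpv_ex[OF i1 True] by blast
        have wi: "0 \<le> w i" using w0 i1 True by simp
        have w1': "i = 1 \<longrightarrow> w i = 0" using w1 by simp
        show ?thesis
        proof (cases "l \<le> n")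
          case True
          have ih: "dpv a n (Suc l) - d l * w (Suc l) \<le> TC (Suc l)"
            using 1(2)[of "Suc l"] l True by simp
          have hx': "\<forall>q\<in>{i..l}. x q = w (Suc q) - w q - v q" using hx i1 True by auto
          have b: "(\<Sum>q=i..l. (- d l + (\<Sum>r=Suc q..l. c r)) * x q) - d (i-1) * w i + d l * w (Suc l)
             \<le> (\<Sum>k=i..l. c k * w k + d k * v k)"
            by (rule BI1[OF hx' i1 _ True w1' wi _ tel]) (use l v0 i1 True in auto)
          have as: "(\<Sum>q=i..min l n. a q l) = (\<Sum>q=i..l. (- d l + (\<Sum>r=Suc q..l. c r)) * x q)"
            using True by (simp add: a_def x_def pic_def)
          have ts: "TC i = (\<Sum>k=i..l. c k * w k + d k * v k) + TC (Suc l)"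
            unfolding TC_def using l True by (simp add: sum_split_at[of i l n])
          show ?thesis unfolding eq as ts using True ih b by simp
        next
          case False
          then have ln: "l = n+1" using l by simp
          have hx': "\<forall>q\<in>{i..n}. x q = w (Suc q) - w q - v q" using hx i1 by auto
          have b: "(\<Sum>q=i..n. (C + (\<Sum>r=Suc q..n. c r)) * x q) - d (i-1) * w i
             \<le> (\<Sum>k=i..n. c k * w k + d k * v k) + C * w (Suc n)"
            by (rule BI2[OF hx' i1 \<open>i \<le> n\<close> w1' wi _ c0 d0 C0]) (use v0 i1 in auto)
          have as: "(\<Sum>q=i..min l n. a q l) = (\<Sum>q=i..n. (C + (\<Sum>r=Suc q..n. c r)) * x q)"
            using ln by (simp add: a_def x_def pic_def)
          show ?thesis unfolding eq as using ln b by (simp add: dpv_out TC_def)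
        qed
      qed
    qed
  qed
  have "dpv a n 1 \<le> TC 1" using claim[of 1] w1 by simp
  then show "dpv (\<lambda>q l. pic n c d C q l * (u q - s q)) n 1 \<le> y"
    unfolding a_def TC_def y by simp
qed

lemma fval_eq_dpv:
  assumes n1: "1 \<le> n" and c0: "\<forall>i\<in>{1..n}. 0 \<le> c i" and d0: "\<forall>i\<in>{1..n}. 0 \<le> d i" and C0: "0 \<le> C"
  and tel: "\<forall>i\<in>{1..n-1}. d (i+1) - d i \<le> c (i+1)"
  shows "fval n c d C s u = dpv (\<lambda>q l. pic n c d C q l * (u q - s q)) n 1"
proof (rule antisym)
  define a where "a = (\<lambda>q l. pic n c d C q l * (u q - s q))"
  define g where "g = (\<lambda>k. dpv a n k - dpv a n (Suc k))"
  have "fval n c d C s u \<le> (\<Sum>q=1..n. g q)"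
  proof (rule fval_upper[OF c0 d0 C0], intro ballI)
    fix m l assume m: "m \<in> {1..n}" and l: "l \<in> {m..n+1}"
    have "(\<Sum>q=m..min l n. a q l) \<le> dpv a n m - dpv a n (Suc (min l n))"
      using dpv_ge[of m n l a] m l by auto
    also have "\<dots> = (\<Sum>q=m..min l n. g q)" unfolding g_def using m l dpv_tel[of m "min l n" a n] by (simp add: min_def)
    finally show "(\<Sum>q=m..min l n. pic n c d C q l * (u q - s q)) \<le> (\<Sum>q=m..min l n. g q)"
      unfolding a_def .
  qed
  also have "\<dots> = dpv a n 1" unfolding g_def using n1 by (simp add: dpv_tel dpv_out)
  finally show "fval n c d C s u \<le> dpv (\<lambda>q l. pic n c d C q l * (u q - s q)) n 1" unfolding a_def .
next
  show "dpv (\<lambda>q l. pic n c d C q l * (u q - s q)) n 1 \<le> fval n c d C s u"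
    by (rule fval_lower[OF n1 c0 d0 C0 tel])
qed

lemma fval_nonneg:
  assumes c0: "\<forall>i\<in>{1..n}. 0 \<le> c i" and d0: "\<forall>i\<in>{1..n}. 0 \<le> d i" and C0: "0 \<le> C"
  shows "0 \<le> fval n c d C s u"
  unfolding fval_fset
proof (rule cInf_greatest)
  show "fset n c d C s u \<noteq> {}" using wr_in_fset[OF c0 d0 C0, of u s] by blast
next
  fix y assume "y \<in> fset n c d C s u"
  then show "0 \<le> y" unfolding fset_def using c0 d0 C0
    by (auto intro!: add_nonneg_nonneg sum_nonneg mult_nonneg_nonneg)
qed

lemma coord1:
  fixes pi s L h U t \<rho> z :: real
  assumes "L \<le> t" "t \<le> U" "L \<le> h" "h \<le> U" "0 \<le> \<rho>"
  and z1: "z + pi * s + \<bar>L - h\<bar> * \<rho> \<ge> pi * L"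
  and z2: "z + pi * s \<ge> pi * h"
  and z3: "z + pi * s + \<bar>U - h\<bar> * \<rho> \<ge> pi * U"
  shows "pi * (t - s) - \<rho> * \<bar>t - h\<bar> \<le> z"
proof (cases "h \<le> t")
  case True
  show ?thesis
  proof (cases "U = h")
    case True then show ?thesis using \<open>h \<le> t\<close> assms by (simp add: right_diff_distrib)
  next
    case False
    then have Uh: "0 < U - h" using assms by simp
    have id: "(U - h) * (pi * (t - s) - \<rho> * (t - h)) = (U - t) * (pi * (h - s)) + (t - h) * (pi * (U - s) - \<rho> * (U - h))"
      by (simp add: algebra_simps)
    have "(U - t) * (pi * (h - s)) \<le> (U - t) * z" using z2 assms by (intro mult_left_mono) (auto simp: algebra_simps)
    moreover have "(t - h) * (pi * (U - s) - \<rho> * (U - h)) \<le> (t - h) * z"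
      using z3 assms True by (intro mult_left_mono) (auto simp: algebra_simps)
    ultimately have "(U - h) * (pi * (t - s) - \<rho> * (t - h)) \<le> (U - h) * z"
      unfolding id by (simp add: algebra_simps)
    then have "pi * (t - s) - \<rho> * (t - h) \<le> z" using Uh by simp
    then show ?thesis using True by simp
  qed
next
  case False
  show ?thesis
  proof (cases "L = h")
    case True then show ?thesis using False assms by (simp add: right_diff_distrib)
  next
    case nL: False
    then have hL: "0 < h - L" using assms by simp
    have id: "(h - L) * (pi * (t - s) - \<rho> * (h - t)) = (t - L) * (pi * (h - s)) + (h - t) * (pi * (L - s) - \<rho> * (h - L))"
      by (simp add: algebra_simps)
    have "(t - L) * (pi * (h - s)) \<le> (t - L) * z" using z2 assms by (intro mult_left_mono) (auto simp: algebra_simps)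
    moreover have "(h - t) * (pi * (L - s) - \<rho> * (h - L)) \<le> (h - t) * z"
      using z1 assms False by (intro mult_left_mono) (auto simp: algebra_simps)
    ultimately have "(h - L) * (pi * (t - s) - \<rho> * (h - t)) \<le> (h - L) * z"
      unfolding id by (simp add: algebra_simps)
    then have "pi * (t - s) - \<rho> * (h - t) \<le> z" using hL by simp
    then show ?thesis using False by simp
  qed
qed

lemma coord2:
  fixes pi s L h U t \<rho> z bL bU r :: real
  assumes "L \<le> t" "t \<le> U" "0 \<le> \<rho>" "0 \<le> bL" "0 \<le> bU"
  and zc: "z + pi * s - (U - h) * bU - (h - L) * bL - r \<ge> pi * h"
  and sc: "sqrt ((pi + bL - bU)\<^sup>2 + (r - \<rho>)\<^sup>2) \<le> r + \<rho>"
  shows "pi * (t - s) - \<rho> * \<bar>t - h\<bar> ^ 2 \<le> z"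
proof -
  define a where "a = pi + bL - bU"
  define e where "e = t - h"
  have "0 \<le> sqrt ((pi + bL - bU)\<^sup>2 + (r - \<rho>)\<^sup>2)" by simp
  then have rp: "0 \<le> r + \<rho>" using sc by linarith
  have "a\<^sup>2 + (r - \<rho>)\<^sup>2 \<le> (r + \<rho>)\<^sup>2"
  proof -
    have X0: "0 \<le> a\<^sup>2 + (r - \<rho>)\<^sup>2" by simp
    have "(sqrt (a\<^sup>2 + (r - \<rho>)\<^sup>2))\<^sup>2 \<le> (r + \<rho>)\<^sup>2"
      by (rule power_mono[OF sc[folded a_def] real_sqrt_ge_zero]) simp
    then show ?thesis using X0 by simp
  qed
  then have a4: "a\<^sup>2 \<le> 4 * r * \<rho>" by (simp add: power2_eq_square algebra_simps)
  have key: "a * e \<le> \<rho> * e\<^sup>2 + r"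
  proof (cases "\<rho> = 0")
    case True
    then have "a = 0" using a4 by simp
    then show ?thesis using True rp by simp
  next
    case False
    then have rpos: "0 < \<rho>" using assms by simp
    have "4 * \<rho> * (\<rho> * e\<^sup>2 + r - a * e) = (2 * \<rho> * e - a)\<^sup>2 + (4 * r * \<rho> - a\<^sup>2)"
      by (simp add: power2_eq_square algebra_simps)
    also have "\<dots> \<ge> 0" using a4 by simp
    finally have "0 \<le> 4 * \<rho> * (\<rho> * e\<^sup>2 + r - a * e)" .
    then have "0 \<le> \<rho> * e\<^sup>2 + r - a * e" using rpos by (simp add: zero_le_mult_iff)
    then show ?thesis by simp
  qed
  have "pi * e = a * e - bL * e + bU * e" unfolding a_def by (simp add: algebra_simps)
  moreover have "- bL * e \<le> bL * (h - L)"
  proof -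
    have "bL * (h - t) \<le> bL * (h - L)" using assms by (intro mult_left_mono) auto
    then show ?thesis unfolding e_def by (simp add: algebra_simps)
  qed
  moreover have "bU * e \<le> bU * (U - h)" using assms unfolding e_def by (simp add: mult_left_mono)
  ultimately have "pi * e - \<rho> * e\<^sup>2 \<le> r + bL * (h - L) + bU * (U - h)" using key by linarith
  moreover have "pi * (t - s) = pi * (h - s) + pi * e" unfolding e_def by (simp add: algebra_simps)
  moreover have "\<bar>t - h\<bar> ^ 2 = e\<^sup>2" unfolding e_def by simp
  ultimately show ?thesis using zc by (simp add: algebra_simps)
qed

definition cst :: "nat \<Rightarrow> nat \<Rightarrow> (nat \<Rightarrow> vec) \<Rightarrow> nat \<Rightarrow> vec \<Rightarrow> real" where
  "cst p n uhat j u = (\<Sum>i=1..n. \<bar>u i - uhat j i\<bar> ^ p)"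

lemma K1gen:
  fixes g e :: "nat \<Rightarrow> real" and zz :: "nat \<Rightarrow> nat \<Rightarrow> real"
  assumes c0: "\<forall>i\<in>{1..n}. 0 \<le> c i" and d0: "\<forall>i\<in>{1..n}. 0 \<le> d i" and C0: "0 \<le> C"
  and sumc: "\<forall>i\<in>{1..n}. \<forall>l\<in>{i..n+1}. (\<Sum>k=i..min l n. zz k l) \<le> (\<Sum>k=i..min l n. g k)"
  and coord: "\<forall>q\<in>{1..n}. \<forall>l\<in>{q..n+1}. pic n c d C q l * (u q - s q) - \<rho> * e q \<le> zz q l"
  shows "fval n c d C s u - \<rho> * (\<Sum>q=1..n. e q) \<le> (\<Sum>q=1..n. g q)"
proof -
  have "fval n c d C s u \<le> (\<Sum>q=1..n. g q + \<rho> * e q)"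
  proof (rule fval_upper[OF c0 d0 C0], intro ballI)
    fix m l assume m: "m \<in> {1..n}" and l: "l \<in> {m..n+1}"
    have "(\<Sum>q=m..min l n. pic n c d C q l * (u q - s q)) \<le> (\<Sum>q=m..min l n. zz q l + \<rho> * e q)"
    proof (rule sum_mono)
      fix q assume "q \<in> {m..min l n}"
      then have "q \<in> {1..n}" "l \<in> {q..n+1}" using m l by auto
      then show "pic n c d C q l * (u q - s q) \<le> zz q l + \<rho> * e q" using coord by fastforce
    qed
    also have "\<dots> = (\<Sum>q=m..min l n. zz q l) + (\<Sum>q=m..min l n. \<rho> * e q)" by (simp add: sum.distrib)
    also have "\<dots> \<le> (\<Sum>q=m..min l n. g q) + (\<Sum>q=m..min l n. \<rho> * e q)" using sumc m l by simp
    also have "\<dots> = (\<Sum>q=m..min l n. g q + \<rho> * e q)" by (simp add: sum.distrib)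
    finally show "(\<Sum>q=m..min l n. pic n c d C q l * (u q - s q)) \<le> (\<Sum>q=m..min l n. g q + \<rho> * e q)" .
  qed
  then show ?thesis by (simp add: sum.distrib sum_distrib_left)
qed

lemma exists_u:
  fixes A :: "nat \<Rightarrow> nat \<Rightarrow> real \<Rightarrow> real" and T :: "nat \<Rightarrow> nat \<Rightarrow> real"
  assumes TB: "\<forall>q\<in>{1..n}. \<forall>l\<in>{q..n+1}. L q \<le> T q l \<and> T q l \<le> U q"
  shows "\<exists>u. (\<forall>q\<in>{1..n}. L q \<le> u q \<and> u q \<le> U q) \<and> (\<forall>q. q \<notin> {1..n} \<longrightarrow> u q = 0) \<and>
     dpv (\<lambda>q l. A q l (T q l)) n 1 \<le> dpv (\<lambda>q l. A q l (u q)) n 1"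
proof -
  have claim: "1 \<le> i \<longrightarrow> (\<exists>u. (\<forall>q\<in>{i..n}. L q \<le> u q \<and> u q \<le> U q) \<and>
     dpv (\<lambda>q l. A q l (T q l)) n i \<le> dpv (\<lambda>q l. A q l (u q)) n i)" if "i \<le> n+1" for i
    using that
  proof (induction i rule: back_induct)
    case (1 i)
    show ?case
    proof
      assume i1: "1 \<le> i"
      show "\<exists>u. (\<forall>q\<in>{i..n}. L q \<le> u q \<and> u q \<le> U q) \<and>
          dpv (\<lambda>q l. A q l (T q l)) n i \<le> dpv (\<lambda>q l. A q l (u q)) n i"
      proof (cases "i \<le> n")
        case False then show ?thesis by (intro exI[of _ "\<lambda>_. 0"]) (simp add: dpv_out)
      next
        case True
        obtain l where l: "l \<in> {i..n+1}" and eq: "dpv (\<lambda>q l. A q l (T q l)) n i =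
            (\<Sum>q=i..min l n. A q l (T q l)) + dpv (\<lambda>q l. A q l (T q l)) n (Suc (min l n))"
          using dpv_ex[OF i1 True] by blast
        have lt: "i < Suc (min l n)" and le: "Suc (min l n) \<le> n + 1" using l True by auto
        have "\<exists>u'. (\<forall>q\<in>{Suc (min l n)..n}. L q \<le> u' q \<and> u' q \<le> U q) \<and>
          dpv (\<lambda>q l. A q l (T q l)) n (Suc (min l n)) \<le> dpv (\<lambda>q l. A q l (u' q)) n (Suc (min l n))"
          using 1(2)[OF lt le] by simp
        then obtain u' where u'1: "\<forall>q\<in>{Suc (min l n)..n}. L q \<le> u' q \<and> u' q \<le> U q"
          and u'2: "dpv (\<lambda>q l. A q l (T q l)) n (Suc (min l n)) \<le> dpv (\<lambda>q l. A q l (u' q)) n (Suc (min l n))"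
          by blast
        define u where "u = (\<lambda>q. if q \<le> min l n then T q l else u' q)"
        have ub: "\<forall>q\<in>{i..n}. L q \<le> u q \<and> u q \<le> U q"
          using u'1 TB l i1 unfolding u_def by auto
        have "dpv (\<lambda>q l. A q l (T q l)) n i \<le> (\<Sum>q=i..min l n. A q l (u q)) + dpv (\<lambda>q l. A q l (u' q)) n (Suc (min l n))"
        proof -
          have "(\<Sum>q=i..min l n. A q l (T q l)) = (\<Sum>q=i..min l n. A q l (u q))"
            unfolding u_def by (intro sum.cong) auto
          then show ?thesis unfolding eq using u'2 by simp
        qed
        also have "dpv (\<lambda>q l. A q l (u' q)) n (Suc (min l n)) = dpv (\<lambda>q l. A q l (u q)) n (Suc (min l n))"
          unfolding u_def by (intro dpv_cong) auto
        also have "(\<Sum>q=i..min l n. A q l (u q)) + dpv (\<lambda>q l. A q l (u q)) n (Suc (min l n)) \<le> dpv (\<lambda>q l. A q l (u q)) n i"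
          by (rule dpv_ge[OF i1 True l])
        finally show ?thesis using ub by blast
      qed
    qed
  qed
  obtain u where u1: "\<forall>q\<in>{1..n}. L q \<le> u q \<and> u q \<le> U q"
      and u2: "dpv (\<lambda>q l. A q l (T q l)) n 1 \<le> dpv (\<lambda>q l. A q l (u q)) n 1"
    using claim[of 1] by auto
  define u0 where "u0 = (\<lambda>q. if q \<in> {1..n} then u q else 0)"
  have "dpv (\<lambda>q l. A q l (u q)) n 1 = dpv (\<lambda>q l. A q l (u0 q)) n 1"
    unfolding u0_def by (intro dpv_cong) auto
  moreover have "\<forall>q\<in>{1..n}. L q \<le> u0 q \<and> u0 q \<le> U q" using u1 unfolding u0_def by simp
  moreover have "\<forall>q. q \<notin> {1..n} \<longrightarrow> u0 q = 0" unfolding u0_def by simp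
  ultimately show ?thesis using u2 by (intro exI[of _ u0]) simp
qed

lemma box_set_iff: "u \<in> box_set n uL uU \<longleftrightarrow> (\<forall>q\<in>{1..n}. uL q \<le> u q \<and> u q \<le> uU q) \<and> (\<forall>q. q \<notin> {1..n} \<longrightarrow> u q = 0)"
  unfolding box_set_def by auto

definition t1 :: "real \<Rightarrow> real \<Rightarrow> real \<Rightarrow> real \<Rightarrow> real \<Rightarrow> real \<Rightarrow> real" where
  "t1 pv s L h U \<rho> = (let f = (\<lambda>t. pv * (t - s) - \<rho> * \<bar>t - h\<bar>) in
     if f h \<le> f L \<and> f U \<le> f L then L else if f U \<le> f h then h else U)"

lemma t1_props:
  fixes pv s L h U \<rho> :: real
  assumes "L \<le> h" "h \<le> U"
  defines "f \<equiv> (\<lambda>t. pv * (t - s) - \<rho> * \<bar>t - h\<bar>)"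
  shows "L \<le> t1 pv s L h U \<rho> \<and> t1 pv s L h U \<rho> \<le> U \<and>
    f L \<le> f (t1 pv s L h U \<rho>) \<and> f h \<le> f (t1 pv s L h U \<rho>) \<and> f U \<le> f (t1 pv s L h U \<rho>)"
proof -
  have e: "t1 pv s L h U \<rho> = (if f h \<le> f L \<and> f U \<le> f L then L else if f U \<le> f h then h else U)"
    unfolding t1_def f_def Let_def ..
  show ?thesis
  proof (cases "f h \<le> f L \<and> f U \<le> f L")
    case True then show ?thesis unfolding e using assms by simp
  next
    case F1: False
    show ?thesis
    proof (cases "f U \<le> f h")
      case True then show ?thesis unfolding e using assms F1 by auto
    next
      case False then show ?thesis unfolding e using assms F1 by auto
    qed
  qed
qed

lemma coord2_cert:
  fixes pv s L h U \<rho> :: real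
  assumes LU: "L < U" "L \<le> h" "h \<le> U" and r0: "0 \<le> \<rho>"
  shows "\<exists>t bL bU r. L \<le> t \<and> t \<le> U \<and> 0 \<le> bL \<and> 0 \<le> bU \<and>
     (pv * (t - s) - \<rho> * \<bar>t - h\<bar> ^ 2) + pv * s - (U - h) * bU - (h - L) * bL - r \<ge> pv * h \<and>
     sqrt ((pv + bL - bU)\<^sup>2 + (r - \<rho>)\<^sup>2) \<le> r + \<rho>"
proof (cases "\<rho> = 0")
  case True
  show ?thesis
  proof (cases "0 \<le> pv")
    case True
    show ?thesis using \<open>\<rho> = 0\<close> True LU
      by (intro exI[of _ U] exI[of _ 0] exI[of _ pv] exI[of _ 0]) (auto simp: algebra_simps)
  next
    case False
    show ?thesis using \<open>\<rho> = 0\<close> False LU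
      by (intro exI[of _ L] exI[of _ "- pv"] exI[of _ 0] exI[of _ 0]) (auto simp: algebra_simps)
  qed
next
  case False
  then have rp: "0 < \<rho>" using r0 by simp
  define t0 where "t0 = h + pv / (2 * \<rho>)"
  have pi_eq: "pv = 2 * \<rho> * (t0 - h)" unfolding t0_def using rp by simp
  have sq: "\<And>t a r. a = 2 * \<rho> * (t - h) \<Longrightarrow> r = \<rho> * (t - h)\<^sup>2 \<Longrightarrow> sqrt (a\<^sup>2 + (r - \<rho>)\<^sup>2) \<le> r + \<rho>"
  proof -
    fix t a r :: real assume a: "a = 2 * \<rho> * (t - h)" and r: "r = \<rho> * (t - h)\<^sup>2"
    have "a\<^sup>2 + (r - \<rho>)\<^sup>2 = (r + \<rho>)\<^sup>2" unfolding a r by (simp add: power2_eq_square algebra_simps)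
    moreover have "0 \<le> r + \<rho>" unfolding r using rp by simp
    ultimately show "sqrt (a\<^sup>2 + (r - \<rho>)\<^sup>2) \<le> r + \<rho>" by simp
  qed
  consider (up) "U \<le> t0" | (lo) "t0 \<le> L" | (mid) "L < t0" "t0 < U" by linarith
  then show ?thesis
  proof cases
    case up
    have f1: "0 \<le> pv - 2 * \<rho> * (U - h)" unfolding pi_eq using up rp by simp
    have f2: "sqrt ((pv + 0 - (pv - 2 * \<rho> * (U - h)))\<^sup>2 + (\<rho> * (U - h)\<^sup>2 - \<rho>)\<^sup>2) \<le> \<rho> * (U - h)\<^sup>2 + \<rho>"
      by (rule sq[of _ U]) simp_all
    have f3: "pv * h \<le> pv * (U - s) - \<rho> * \<bar>U - h\<bar> ^ 2 + pv * s - (U - h) * (pv - 2 * \<rho> * (U - h)) - (h - L) * 0 - \<rho> * (U - h)\<^sup>2"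
      by (simp add: power2_eq_square algebra_simps)
    have f4: "L \<le> U" "U \<le> U" "(0::real) \<le> 0" using LU by auto
    show ?thesis by (rule exI[of _ U], rule exI[of _ 0], rule exI[of _ "pv - 2 * \<rho> * (U - h)"],
        rule exI[of _ "\<rho> * (U - h)\<^sup>2"]) (intro conjI f1 f2 f3 f4)
  next
    case lo
    have f1: "0 \<le> 2 * \<rho> * (L - h) - pv" unfolding pi_eq using lo rp by simp
    have f2: "sqrt ((pv + (2 * \<rho> * (L - h) - pv) - 0)\<^sup>2 + (\<rho> * (L - h)\<^sup>2 - \<rho>)\<^sup>2) \<le> \<rho> * (L - h)\<^sup>2 + \<rho>"
      by (rule sq[of _ L]) simp_all
    have f3: "pv * h \<le> pv * (L - s) - \<rho> * \<bar>L - h\<bar> ^ 2 + pv * s - (U - h) * 0 - (h - L) * (2 * \<rho> * (L - h) - pv) - \<rho> * (L - h)\<^sup>2"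
      by (simp add: power2_eq_square algebra_simps)
    have f4: "L \<le> L" "L \<le> U" "(0::real) \<le> 0" using LU by auto
    show ?thesis by (rule exI[of _ L], rule exI[of _ "2 * \<rho> * (L - h) - pv"], rule exI[of _ 0],
        rule exI[of _ "\<rho> * (L - h)\<^sup>2"]) (intro conjI f1 f2 f3 f4)
  next
    case mid
    have f2: "sqrt ((pv + 0 - 0)\<^sup>2 + (\<rho> * (t0 - h)\<^sup>2 - \<rho>)\<^sup>2) \<le> \<rho> * (t0 - h)\<^sup>2 + \<rho>"
      by (rule sq[of _ t0]) (simp_all add: pi_eq)
    have f3: "pv * h \<le> pv * (t0 - s) - \<rho> * \<bar>t0 - h\<bar> ^ 2 + pv * s - (U - h) * 0 - (h - L) * 0 - \<rho> * (t0 - h)\<^sup>2"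
      unfolding pi_eq by (simp add: power2_eq_square algebra_simps)
    have f4: "L \<le> t0" "t0 \<le> U" "(0::real) \<le> 0" using mid by auto
    show ?thesis by (rule exI[of _ t0], rule exI[of _ 0], rule exI[of _ 0],
        rule exI[of _ "\<rho> * (t0 - h)\<^sup>2"]) (intro conjI f2 f3 f4)
  qed
qed

lemma meas_coord[measurable]: "(\<lambda>x::vec. x i) \<in> borel_measurable borel"
  by (intro borel_measurable_continuous_onI continuous_on_product_coordinates)

lemma dpv_measurable:
  assumes "\<And>q l. (\<lambda>x. a x q l) \<in> borel_measurable M"
  shows "(\<lambda>x. dpv (a x) n i) \<in> borel_measurable M"
proof -
  have "i \<le> n+1 \<longrightarrow> (\<lambda>x. dpv (a x) n i) \<in> borel_measurable M"
  proof (cases "i \<le> n+1")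
    case True
    then show ?thesis
    proof (induction i rule: back_induct)
      case (1 i)
      show ?case
      proof (cases "1 \<le> i \<and> i \<le> n")
        case False
        then have "\<And>x. dpv (a x) n i = 0" by (subst dpv.simps) auto
        then show ?thesis by simp
      next
        case True
        then have e: "\<And>x. dpv (a x) n i = Max ((\<lambda>l. (\<Sum>q=i..min l n. a x q l) + dpv (a x) n (Suc (min l n))) ` {i..n+1})"
          by (intro dpv_eq) auto
        have "(\<lambda>x. Max ((\<lambda>l. (\<Sum>q=i..min l n. a x q l) + dpv (a x) n (Suc (min l n))) ` {i..n+1})) \<in> borel_measurable M"
        proof (rule borel_measurable_Max)
          fix l assume l: "l \<in> {i..n+1}"
          have "(\<lambda>x. dpv (a x) n (Suc (min l n))) \<in> borel_measurable M"
            using 1(2)[of "Suc (min l n)"] l True by auto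
          moreover have "(\<lambda>x. \<Sum>q=i..min l n. a x q l) \<in> borel_measurable M"
            using assms by (intro borel_measurable_sum) auto
          ultimately show "(\<lambda>x. (\<Sum>q=i..min l n. a x q l) + dpv (a x) n (Suc (min l n))) \<in> borel_measurable M"
            by (intro borel_measurable_add)
        qed simp
        then show ?thesis unfolding e by simp
      qed
    qed
  next
    case False then show ?thesis by simp
  qed
  moreover have "n + 1 < i \<Longrightarrow> (\<lambda>x. dpv (a x) n i) \<in> borel_measurable M"
    by (simp add: dpv_out)
  ultimately show ?thesis by (cases "i \<le> n+1") auto
qed

lemma fval_measurable:
  assumes n1: "1 \<le> n" and c0: "\<forall>i\<in>{1..n}. 0 \<le> c i" and d0: "\<forall>i\<in>{1..n}. 0 \<le> d i" and C0: "0 \<le> C"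
  and tel: "\<forall>i\<in>{1..n-1}. d (i+1) - d i \<le> c (i+1)"
  shows "(\<lambda>u. fval n c d C s u) \<in> borel_measurable borel"
proof -
  have "(\<lambda>u. dpv (\<lambda>q l. pic n c d C q l * (u q - s q)) n 1) \<in> borel_measurable borel"
    by (rule dpv_measurable) measurable
  then show ?thesis by (subst fval_eq_dpv[OF assms]) simp
qed

lemma cst_measurable[measurable]: "cst p n uhat j \<in> borel_measurable borel"
  unfolding cst_def by measurable

lemma paircost_measurable[measurable]:
  "(\<lambda>x::vec\<times>vec. \<Sum>i=1..n. \<bar>fst x i - snd x i\<bar> ^ p) \<in> borel_measurable (borel \<Otimes>\<^sub>M borel)"
  by measurable

lemma box_sets: "box_set n uL uU \<in> sets (borel :: vec measure)"
proof -
  have "box_set n uL uU = (\<Inter>i\<in>{1..n}. {u. uL i \<le> u i} \<inter> {u. u i \<le> uU i}) \<inter> (\<Inter>i\<in>-{1..n}. {u. u i = 0})"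
    unfolding box_set_def by auto
  also have "\<dots> \<in> sets borel"
    by measurable
  finally show ?thesis .
qed

lemma pmf_of_set_uniform:
  assumes "S \<noteq> {}" "finite S"
  shows "measure_pmf (pmf_of_set S) = uniform_measure (count_space UNIV) S"
proof (rule measure_eqI)
  show "sets (measure_pmf (pmf_of_set S)) = sets (uniform_measure (count_space UNIV) S)" by simp
next
  fix A assume "A \<in> sets (measure_pmf (pmf_of_set S))"
  have "emeasure (uniform_measure (count_space UNIV) S) A = emeasure (count_space UNIV) (A \<inter> S) / emeasure (count_space UNIV) S"
    by (subst emeasure_uniform_measure) (auto simp: Int_commute)
  also have "\<dots> = of_nat (card (A \<inter> S)) / of_nat (card S)"
    using assms by (simp add: emeasure_count_space)
  also have "\<dots> = emeasure (measure_pmf (pmf_of_set S)) A"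
    using assms by (subst emeasure_pmf_of_set) (auto simp: Int_commute divide_ennreal ennreal_of_nat_eq_real_of_nat card_gt_0_iff)
  finally show "emeasure (measure_pmf (pmf_of_set S)) A = emeasure (uniform_measure (count_space UNIV) S) A" ..
qed

lemma empirical_pmf:
  assumes "1 \<le> N"
  shows "empirical N uhat = distr (measure_pmf (pmf_of_set {1..N})) borel uhat"
  unfolding empirical_def using assms by (subst pmf_of_set_uniform) auto

lemma empirical_nn_integral:
  assumes "1 \<le> N" "g \<in> borel_measurable borel"
  shows "(\<integral>\<^sup>+ v. g v \<partial>empirical N uhat) = (\<Sum>j=1..N. g (uhat j)) / of_nat N"
  unfolding empirical_pmf[OF assms(1)] using assms
  by (subst nn_integral_distr) (auto simp: nn_integral_pmf_of_set)

lemma prob_empirical: "1 \<le> N \<Longrightarrow> prob_space (empirical N uhat)"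
  unfolding empirical_pmf by (intro measure_pmf.prob_space_distr) simp

lemma cst_self: "1 \<le> p \<Longrightarrow> cst p n uhat j (uhat j) = 0"
  unfolding cst_def by simp

lemma finite_closed_sets: "finite (S :: vec set) \<Longrightarrow> S \<in> sets borel"
  by (intro borel_closed finite_imp_closed)

lemma upper_int:
  fixes F :: "vec \<Rightarrow> real" and \<Gamma> :: "nat \<Rightarrow> real"
  assumes N1: "1 \<le> N" and p1: "1 \<le> p" and Fm: "F \<in> borel_measurable borel" and F0: "\<forall>u. 0 \<le> F u"
  and Q: "Q \<in> wball p n uL uU N uhat \<epsilon>" and e0: "0 < \<epsilon>" and r0: "0 \<le> \<rho>"
  and bound: "\<forall>j\<in>{1..N}. \<forall>u\<in>box_set n uL uU. F u - \<rho> * cst p n uhat j u \<le> \<Gamma> j"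
  and uh: "\<forall>j\<in>{1..N}. uhat j \<in> box_set n uL uU"
  shows "(\<integral>\<^sup>+u. ennreal (F u) \<partial>Q) \<le> ennreal (\<epsilon> ^ p * \<rho> + (1 / real N) * (\<Sum>j=1..N. \<Gamma> j))"
proof -
  have G0: "\<forall>j\<in>{1..N}. 0 \<le> \<Gamma> j"
  proof
    fix j assume j: "j \<in> {1..N}"
    have "F (uhat j) - \<rho> * cst p n uhat j (uhat j) \<le> \<Gamma> j" using bound uh j by blast
    then show "0 \<le> \<Gamma> j" using cst_self[OF p1] F0 by (metis diff_zero mult_zero_right order.trans)
  qed
  have SG0: "0 \<le> (\<Sum>j=1..N. \<Gamma> j)" using G0 by (intro sum_nonneg) auto
  define S where "S = uhat ` {1..N}"
  have Sfin: "finite S" unfolding S_def by simp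
  define h where "h = (\<lambda>v. if v \<in> S then Min (\<Gamma> ` {j\<in>{1..N}. uhat j = v}) else 0)"
  have hprop: "\<And>v. v \<in> S \<Longrightarrow> \<exists>j\<in>{1..N}. uhat j = v \<and> h v = \<Gamma> j"
  proof -
    fix v assume v: "v \<in> S"
    have "Min (\<Gamma> ` {j\<in>{1..N}. uhat j = v}) \<in> \<Gamma> ` {j\<in>{1..N}. uhat j = v}"
      using v unfolding S_def by (intro Min_in) auto
    then show "\<exists>j\<in>{1..N}. uhat j = v \<and> h v = \<Gamma> j" using v unfolding h_def by auto
  qed
  have hle: "\<And>j. j \<in> {1..N} \<Longrightarrow> h (uhat j) \<le> \<Gamma> j"
    unfolding h_def S_def by (auto intro!: Min_le)
  have h0: "\<And>v. 0 \<le> h v"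
  proof -
    fix v show "0 \<le> h v"
    proof (cases "v \<in> S")
      case True then obtain j where "j \<in> {1..N}" "h v = \<Gamma> j" using hprop by blast
      then show ?thesis using G0 by simp
    qed (simp add: h_def)
  qed
  have hm: "h \<in> borel_measurable borel"
  proof (rule measurable_discrete_difference[where f="\<lambda>_. 0" and X=S])
    show "countable S" using Sfin by (simp add: countable_finite)
    show "\<And>x. x \<in> S \<Longrightarrow> {x} \<in> sets borel" by (intro finite_closed_sets) simp
  qed (auto simp: h_def)
  show ?thesis
  proof (rule ennreal_le_epsilon)
    fix e :: real assume e: "0 < e"
    define \<eta> where "\<eta> = e / (\<rho> + 1)"
    have eta: "0 < \<eta>" unfolding \<eta>_def using e r0 by simp
    have reta: "\<rho> * \<eta> \<le> e"
    proof -
      have "\<rho> * \<eta> = e * (\<rho> / (\<rho> + 1))" unfolding \<eta>_def by (simp add: field_simps)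
      also have "\<dots> \<le> e * 1" using e r0 by (intro mult_left_mono) auto
      finally show ?thesis by simp
    qed
    have Qb: "sets Q = sets borel" "prob_space Q" "AE u in Q. u \<in> box_set n uL uU"
      "wass_pow p n Q (empirical N uhat) \<le> ennreal (\<epsilon> ^ p)"
      using Q unfolding wball_def by auto
    have "wass_pow p n Q (empirical N uhat) < ennreal (\<epsilon> ^ p + \<eta>)"
    proof -
      have "ennreal (\<epsilon> ^ p) < ennreal (\<epsilon> ^ p + \<eta>)"
        using eta e0 by (intro ennreal_lessI) (auto intro: add_nonneg_pos)
      then show ?thesis using Qb(4) by (rule le_less_trans[rotated])
    qed
    then obtain P where P: "P \<in> couplings Q (empirical N uhat)"
      and Pc: "(\<integral>\<^sup>+ x. ennreal (\<Sum>i=1..n. \<bar>fst x i - snd x i\<bar> ^ p) \<partial>P) < ennreal (\<epsilon> ^ p + \<eta>)"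
      unfolding wass_pow_def by (auto simp: INF_less_iff)
    have sP: "sets P = sets (borel \<Otimes>\<^sub>M borel)" and dfst: "distr P borel fst = Q"
      and dsnd: "distr P borel snd = empirical N uhat"
      using P unfolding couplings_def by auto
    have mfst: "fst \<in> measurable P borel"
      using measurable_cong_sets[OF sP refl] by (metis measurable_fst)
    have msnd: "snd \<in> measurable P borel"
      using measurable_cong_sets[OF sP refl] by (metis measurable_snd)
    have AE1: "AE x in P. fst x \<in> box_set n uL uU"
      using Qb(3) unfolding dfst[symmetric] by (rule AE_distrD[OF mfst])
    have "AE v in empirical N uhat. v \<in> S"
    proof -
      have "AE j in measure_pmf (pmf_of_set {1..N}). uhat j \<in> S"
        using N1 by (auto simp: AE_measure_pmf_iff S_def)
      moreover have "{x \<in> space borel. x \<in> S} \<in> sets borel" using finite_closed_sets[OF Sfin] by simp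
      ultimately show ?thesis unfolding empirical_pmf[OF N1] by (subst AE_distr_iff) auto
    qed
    then have AE2: "AE x in P. snd x \<in> S"
      unfolding dsnd[symmetric] by (rule AE_distrD[OF msnd])
    have cm: "(\<lambda>x. \<Sum>i=1..n. \<bar>fst x i - snd x i\<bar> ^ p) \<in> borel_measurable P"
      using measurable_cong_sets[OF sP refl] paircost_measurable by blast
    have hsm: "(\<lambda>x. h (snd x)) \<in> borel_measurable P"
      using hm msnd by measurable
    have "(\<integral>\<^sup>+u. ennreal (F u) \<partial>Q) = (\<integral>\<^sup>+x. ennreal (F (fst x)) \<partial>P)"
      unfolding dfst[symmetric] using Fm mfst by (subst nn_integral_distr) auto
    also have "\<dots> \<le> (\<integral>\<^sup>+x. ennreal (h (snd x)) + ennreal (\<rho> * (\<Sum>i=1..n. \<bar>fst x i - snd x i\<bar> ^ p)) \<partial>P)"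
    proof (rule nn_integral_mono_AE)
      show "AE x in P. ennreal (F (fst x)) \<le> ennreal (h (snd x)) + ennreal (\<rho> * (\<Sum>i=1..n. \<bar>fst x i - snd x i\<bar> ^ p))"
        using AE1 AE2
      proof eventually_elim
        case (elim x)
        obtain j where j: "j \<in> {1..N}" "uhat j = snd x" "h (snd x) = \<Gamma> j" using hprop elim(2) by blast
        have "F (fst x) - \<rho> * cst p n uhat j (fst x) \<le> \<Gamma> j" using bound j elim(1) by blast
        moreover have "cst p n uhat j (fst x) = (\<Sum>i=1..n. \<bar>fst x i - snd x i\<bar> ^ p)"
          unfolding cst_def j(2) ..
        ultimately have "F (fst x) \<le> h (snd x) + \<rho> * (\<Sum>i=1..n. \<bar>fst x i - snd x i\<bar> ^ p)"
          using j(3) by simp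
        moreover have "0 \<le> \<rho> * (\<Sum>i=1..n. \<bar>fst x i - snd x i\<bar> ^ p)" using r0 by (simp add: sum_nonneg)
        ultimately show ?case using h0 by (simp add: ennreal_plus[symmetric] del: ennreal_plus)
      qed
    qed
    also have "\<dots> = (\<integral>\<^sup>+x. ennreal (h (snd x)) \<partial>P) + (\<integral>\<^sup>+x. ennreal (\<rho> * (\<Sum>i=1..n. \<bar>fst x i - snd x i\<bar> ^ p)) \<partial>P)"
      using hsm cm by (intro nn_integral_add) auto
    also have "(\<integral>\<^sup>+x. ennreal (h (snd x)) \<partial>P) = (\<integral>\<^sup>+v. ennreal (h v) \<partial>empirical N uhat)"
      unfolding dsnd[symmetric] using hm msnd by (subst nn_integral_distr) auto
    also have "\<dots> = (\<Sum>j=1..N. ennreal (h (uhat j))) / of_nat N"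
      using hm N1 by (subst empirical_nn_integral) auto
    also have "\<dots> \<le> ennreal ((1 / real N) * (\<Sum>j=1..N. \<Gamma> j))"
    proof -
      have "(\<Sum>j=1..N. ennreal (h (uhat j))) \<le> (\<Sum>j=1..N. ennreal (\<Gamma> j))"
        using hle by (intro sum_mono ennreal_leI) auto
      also have "\<dots> = ennreal (\<Sum>j=1..N. \<Gamma> j)" using G0 by (intro sum_ennreal) auto
      finally have "(\<Sum>j=1..N. ennreal (h (uhat j))) / of_nat N \<le> ennreal (\<Sum>j=1..N. \<Gamma> j) / of_nat N"
        by (intro divide_right_mono_ennreal)
      also have "\<dots> = ennreal ((\<Sum>j=1..N. \<Gamma> j) / real N)"
        using N1 SG0 by (subst divide_ennreal[symmetric]) (auto simp: ennreal_of_nat_eq_real_of_nat)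
      finally show ?thesis by simp
    qed
    also have "(\<integral>\<^sup>+x. ennreal (\<rho> * (\<Sum>i=1..n. \<bar>fst x i - snd x i\<bar> ^ p)) \<partial>P)
        = ennreal \<rho> * (\<integral>\<^sup>+x. ennreal (\<Sum>i=1..n. \<bar>fst x i - snd x i\<bar> ^ p) \<partial>P)"
      using cm r0 by (subst nn_integral_cmult[symmetric]) (auto simp: ennreal_mult sum_nonneg intro!: nn_integral_cong)
    also have "\<dots> \<le> ennreal \<rho> * ennreal (\<epsilon> ^ p + \<eta>)"
      using Pc by (intro mult_left_mono) auto
    finally have "(\<integral>\<^sup>+u. ennreal (F u) \<partial>Q) \<le> ennreal ((1 / real N) * (\<Sum>j=1..N. \<Gamma> j)) + ennreal (\<rho> * (\<epsilon> ^ p + \<eta>))"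
      using r0 eta e0 by (simp add: ennreal_mult add_nonneg_nonneg)
    also have "\<dots> = ennreal ((1 / real N) * (\<Sum>j=1..N. \<Gamma> j) + \<rho> * (\<epsilon> ^ p + \<eta>))"
      using SG0 r0 eta e0 by (subst ennreal_plus) (auto intro!: mult_nonneg_nonneg)
    also have "\<dots> \<le> ennreal ((\<epsilon> ^ p * \<rho> + (1 / real N) * (\<Sum>j=1..N. \<Gamma> j)) + e)"
      using reta by (intro ennreal_leI) (simp add: algebra_simps)
    also have "\<dots> = ennreal (\<epsilon> ^ p * \<rho> + (1 / real N) * (\<Sum>j=1..N. \<Gamma> j)) + ennreal e"
      using SG0 r0 e e0 by (subst ennreal_plus) (auto intro!: mult_nonneg_nonneg)
    finally show "(\<integral>\<^sup>+u. ennreal (F u) \<partial>Q) \<le> ennreal (\<epsilon> ^ p * \<rho> + (1 / real N) * (\<Sum>j=1..N. \<Gamma> j)) + ennreal e" .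
  qed
qed

lemma pair_bern_integral:
  fixes g :: "nat \<times> bool \<Rightarrow> real"
  assumes N1: "1 \<le> N" and th: "0 \<le> \<theta>" "\<theta> \<le> 1" and g0: "\<And>x. 0 \<le> g x"
  shows "(\<integral>\<^sup>+x. ennreal (g x) \<partial>measure_pmf (pair_pmf (pmf_of_set {1..N}) (bernoulli_pmf \<theta>)))
     = ennreal ((1 / real N) * (\<Sum>j=1..N. \<theta> * g (j, True) + (1 - \<theta>) * g (j, False)))"
proof -
  have inner: "\<And>a. (\<integral>\<^sup>+b. ennreal (g (a, b)) \<partial>measure_pmf (bernoulli_pmf \<theta>)) = ennreal (\<theta> * g (a, True) + (1 - \<theta>) * g (a, False))"
    using th g0 by (simp add: ennreal_plus[symmetric] ennreal_mult[symmetric] mult.commute del: ennreal_plus)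
  have "(\<integral>\<^sup>+x. ennreal (g x) \<partial>measure_pmf (pair_pmf (pmf_of_set {1..N}) (bernoulli_pmf \<theta>)))
      = (\<integral>\<^sup>+a. ennreal (\<theta> * g (a, True) + (1 - \<theta>) * g (a, False)) \<partial>measure_pmf (pmf_of_set {1..N}))"
    by (simp add: nn_integral_pair_pmf' inner)
  also have "\<dots> = (\<Sum>j=1..N. ennreal (\<theta> * g (j, True) + (1 - \<theta>) * g (j, False))) / of_nat N"
    using N1 by (subst nn_integral_pmf_of_set) auto
  also have "\<dots> = ennreal (\<Sum>j=1..N. \<theta> * g (j, True) + (1 - \<theta>) * g (j, False)) / of_nat N"
    using th g0 by (subst sum_ennreal) (auto intro!: add_nonneg_nonneg mult_nonneg_nonneg)
  also have "\<dots> = ennreal ((\<Sum>j=1..N. \<theta> * g (j, True) + (1 - \<theta>) * g (j, False)) / real N)"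
    using N1 th g0 by (subst divide_ennreal[symmetric]) (auto simp: ennreal_of_nat_eq_real_of_nat intro!: sum_nonneg add_nonneg_nonneg mult_nonneg_nonneg)
  finally show ?thesis by simp
qed

lemma construct_Q:
  fixes up um :: "nat \<Rightarrow> vec" and F :: "vec \<Rightarrow> real"
  assumes N1: "1 \<le> N" and th: "0 \<le> \<theta>" "\<theta> \<le> 1"
  and ub: "\<forall>j\<in>{1..N}. up j \<in> box_set n uL uU \<and> um j \<in> box_set n uL uU"
  and costb: "(1 / real N) * (\<Sum>j=1..N. \<theta> * cst p n uhat j (up j) + (1 - \<theta>) * cst p n uhat j (um j)) \<le> \<epsilon> ^ p"
  and Fm: "F \<in> borel_measurable borel" and F0: "\<forall>u. 0 \<le> F u"
  shows "\<exists>Q\<in>wball p n uL uU N uhat \<epsilon>.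
     (\<integral>\<^sup>+u. ennreal (F u) \<partial>Q) = ennreal ((1 / real N) * (\<Sum>j=1..N. \<theta> * F (up j) + (1 - \<theta>) * F (um j)))"
proof -
  define \<pi> where "\<pi> = pair_pmf (pmf_of_set {1..N}) (bernoulli_pmf \<theta>)"
  define pt where "pt = (\<lambda>y::nat\<times>bool. if snd y then up (fst y) else um (fst y))"
  define Q where "Q = distr (measure_pmf \<pi>) borel pt"
  define P where "P = distr (measure_pmf \<pi>) (borel \<Otimes>\<^sub>M borel) (\<lambda>y. (pt y, uhat (fst y)))"
  have setpi: "set_pmf \<pi> = {1..N} \<times> set_pmf (bernoulli_pmf \<theta>)"
    unfolding \<pi>_def using N1 by (simp add: set_pair_pmf)
  have sQ: "sets Q = sets borel" unfolding Q_def by simp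
  have pQ: "prob_space Q" unfolding Q_def by (intro measure_pmf.prob_space_distr) simp
  have aQ: "AE u in Q. u \<in> box_set n uL uU"
  proof -
    have "AE y in measure_pmf \<pi>. pt y \<in> box_set n uL uU"
      unfolding AE_measure_pmf_iff setpi pt_def using ub by auto
    then show ?thesis unfolding Q_def using box_sets by (subst AE_distr_iff) auto
  qed
  have PC: "P \<in> couplings Q (empirical N uhat)"
    unfolding couplings_def
  proof (intro CollectI conjI)
    show "sets P = sets (borel \<Otimes>\<^sub>M borel)" unfolding P_def by simp
    show "prob_space P" unfolding P_def by (intro measure_pmf.prob_space_distr) (simp add: space_pair_measure)
    show "distr P borel fst = Q"
      unfolding P_def Q_def by (subst distr_distr) (auto simp: comp_def space_pair_measure)
    have "distr P borel snd = distr (measure_pmf \<pi>) borel (\<lambda>y. uhat (fst y))"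
      unfolding P_def by (subst distr_distr) (auto simp: comp_def space_pair_measure)
    also have "\<dots> = distr (distr (measure_pmf \<pi>) (count_space UNIV) fst) borel uhat"
      by (subst distr_distr) (auto simp: comp_def space_pair_measure)
    also have "\<dots> = distr (measure_pmf (pmf_of_set {1..N})) borel uhat"
      unfolding map_pmf_rep_eq[symmetric] \<pi>_def map_fst_pair_pmf ..
    also have "\<dots> = empirical N uhat" using empirical_pmf[OF N1] by simp
    finally show "distr P borel snd = empirical N uhat" .
  qed
  have costP: "(\<integral>\<^sup>+ x. ennreal (\<Sum>i=1..n. \<bar>fst x i - snd x i\<bar> ^ p) \<partial>P)
      = ennreal ((1 / real N) * (\<Sum>j=1..N. \<theta> * cst p n uhat j (up j) + (1 - \<theta>) * cst p n uhat j (um j)))"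
  proof -
    have "(\<integral>\<^sup>+ x. ennreal (\<Sum>i=1..n. \<bar>fst x i - snd x i\<bar> ^ p) \<partial>P)
        = (\<integral>\<^sup>+ y. ennreal (cst p n uhat (fst y) (pt y)) \<partial>measure_pmf \<pi>)"
      unfolding P_def by (subst nn_integral_distr) (auto simp: cst_def space_pair_measure)
    also have "\<dots> = ennreal ((1 / real N) * (\<Sum>j=1..N. \<theta> * cst p n uhat j (up j) + (1 - \<theta>) * cst p n uhat j (um j)))"
      unfolding \<pi>_def by (subst pair_bern_integral[OF N1 th]) (auto simp: cst_def pt_def sum_nonneg)
    finally show ?thesis .
  qed
  have "wass_pow p n Q (empirical N uhat) \<le> ennreal (\<epsilon> ^ p)"
  proof -
    have "wass_pow p n Q (empirical N uhat) \<le> (\<integral>\<^sup>+ x. ennreal (\<Sum>i=1..n. \<bar>fst x i - snd x i\<bar> ^ p) \<partial>P)"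
      unfolding wass_pow_def by (rule INF_lower[OF PC])
    also have "\<dots> \<le> ennreal (\<epsilon> ^ p)" unfolding costP using costb by (intro ennreal_leI)
    finally show ?thesis .
  qed
  then have QW: "Q \<in> wball p n uL uU N uhat \<epsilon>"
    unfolding wball_def using sQ pQ aQ by auto
  have "(\<integral>\<^sup>+u. ennreal (F u) \<partial>Q) = (\<integral>\<^sup>+y. ennreal (F (pt y)) \<partial>measure_pmf \<pi>)"
    unfolding Q_def using Fm by (subst nn_integral_distr) auto
  also have "\<dots> = ennreal ((1 / real N) * (\<Sum>j=1..N. \<theta> * F (up j) + (1 - \<theta>) * F (um j)))"
    unfolding \<pi>_def by (subst pair_bern_integral[OF N1 th]) (auto simp: pt_def F0)
  finally show ?thesis using QW by blast
qed

definition Av :: "nat \<Rightarrow> (nat \<Rightarrow> real) \<Rightarrow> real" where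
  "Av N f = (1 / real N) * (\<Sum>j=1..N. f j)"

lemma Av_add: "Av N (\<lambda>j. f j + g j) = Av N f + Av N g"
  unfolding Av_def by (simp add: sum.distrib algebra_simps)
lemma Av_diff: "Av N (\<lambda>j. f j - g j) = Av N f - Av N g"
  unfolding Av_def by (simp add: sum_subtractf algebra_simps)
lemma Av_cmult: "Av N (\<lambda>j. a * f j) = a * Av N f"
  unfolding Av_def by (simp add: sum_distrib_left algebra_simps)
lemma Av_mono: "(\<And>j. j \<in> {1..N} \<Longrightarrow> f j \<le> g j) \<Longrightarrow> Av N f \<le> Av N g"
  unfolding Av_def by (intro mult_left_mono sum_mono) auto
lemma Av_const: "1 \<le> N \<Longrightarrow> Av N (\<lambda>j. a) = a"
  unfolding Av_def by simp
lemma Av_cong: "(\<And>j. j \<in> {1..N} \<Longrightarrow> f j = g j) \<Longrightarrow> Av N f = Av N g"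
  unfolding Av_def using sum.cong[of "{1..N}" "{1..N}" f g] by simp

context
  fixes F :: "vec \<Rightarrow> real" and p n N :: nat and uL uU :: vec and uhat :: "nat \<Rightarrow> vec" and \<epsilon> K :: real
  assumes N1: "1 \<le> N" and p1: "1 \<le> p" and e0: "0 < \<epsilon>"
  and Fm: "F \<in> borel_measurable borel" and F0: "\<forall>u. 0 \<le> F u"
  and uh: "\<forall>j\<in>{1..N}. uhat j \<in> box_set n uL uU"
  and Kb: "\<forall>j\<in>{1..N}. \<forall>u\<in>box_set n uL uU. cst p n uhat j u \<le> K"
  and Att: "\<forall>\<rho>\<ge>0. \<forall>j\<in>{1..N}. \<exists>u\<in>box_set n uL uU. \<forall>v\<in>box_set n uL uU.
     F v - \<rho> * cst p n uhat j v \<le> F u - \<rho> * cst p n uhat j u"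
begin

definition HH :: "nat \<Rightarrow> real \<Rightarrow> real" where
  "HH j \<rho> = Sup ((\<lambda>u. F u - \<rho> * cst p n uhat j u) ` box_set n uL uU)"

definition Phi :: "real \<Rightarrow> real" where
  "Phi \<rho> = \<epsilon> ^ p * \<rho> + Av N (\<lambda>j. HH j \<rho>)"

lemma cst_nonneg: "0 \<le> cst p n uhat j u"
  unfolding cst_def by (simp add: sum_nonneg)

lemma HH_att: "0 \<le> \<rho> \<Longrightarrow> j \<in> {1..N} \<Longrightarrow> \<exists>u\<in>box_set n uL uU. HH j \<rho> = F u - \<rho> * cst p n uhat j u"
proof -
  assume r: "0 \<le> \<rho>" and j: "j \<in> {1..N}"
  obtain u where u: "u \<in> box_set n uL uU" and m: "\<forall>v\<in>box_set n uL uU. F v - \<rho> * cst p n uhat j v \<le> F u - \<rho> * cst p n uhat j u"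
    using Att r j by blast
  have "HH j \<rho> = F u - \<rho> * cst p n uhat j u"
    unfolding HH_def by (rule cSup_eq_maximum) (use u m in auto)
  then show ?thesis using u by blast
qed

lemma HH_ge: "0 \<le> \<rho> \<Longrightarrow> j \<in> {1..N} \<Longrightarrow> u \<in> box_set n uL uU \<Longrightarrow> F u - \<rho> * cst p n uhat j u \<le> HH j \<rho>"
proof -
  assume r: "0 \<le> \<rho>" and j: "j \<in> {1..N}" and u: "u \<in> box_set n uL uU"
  obtain w where w: "w \<in> box_set n uL uU" and m: "\<forall>v\<in>box_set n uL uU. F v - \<rho> * cst p n uhat j v \<le> F w - \<rho> * cst p n uhat j w"
    using Att r j by blast
  have "bdd_above ((\<lambda>u. F u - \<rho> * cst p n uhat j u) ` box_set n uL uU)"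
    using m by (auto simp: bdd_above_def)
  then show ?thesis unfolding HH_def using u by (intro cSup_upper) auto
qed

lemma HH_nonneg: "0 \<le> \<rho> \<Longrightarrow> j \<in> {1..N} \<Longrightarrow> 0 \<le> HH j \<rho>"
proof -
  assume r: "0 \<le> \<rho>" and j: "j \<in> {1..N}"
  have "F (uhat j) - \<rho> * cst p n uhat j (uhat j) \<le> HH j \<rho>" using HH_ge[OF r j] uh j by blast
  then show ?thesis using cst_self[OF p1] F0 by (metis diff_zero mult_zero_right order.trans)
qed

lemma K0: "0 \<le> K"
proof -
  have j: "1 \<in> {1..N}" using N1 by simp
  then have "cst p n uhat 1 (uhat 1) \<le> K" using Kb uh by blast
  then show ?thesis using cst_nonneg[of 1 "uhat 1"] by linarith
qed

lemma HH_lip: "0 \<le> \<rho> \<Longrightarrow> 0 \<le> \<rho>' \<Longrightarrow> j \<in> {1..N} \<Longrightarrow> HH j \<rho> - \<bar>\<rho>' - \<rho>\<bar> * K \<le> HH j \<rho>'"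
proof -
  assume r: "0 \<le> \<rho>" and r': "0 \<le> \<rho>'" and j: "j \<in> {1..N}"
  obtain u where u: "u \<in> box_set n uL uU" and e: "HH j \<rho> = F u - \<rho> * cst p n uhat j u"
    using HH_att[OF r j] by blast
  have "(\<rho>' - \<rho>) * cst p n uhat j u \<le> \<bar>\<rho>' - \<rho>\<bar> * K"
  proof -
    have c0: "0 \<le> cst p n uhat j u" by (rule cst_nonneg)
    have "(\<rho>' - \<rho>) * cst p n uhat j u \<le> \<bar>\<rho>' - \<rho>\<bar> * cst p n uhat j u"
      using c0 by (intro mult_right_mono) auto
    also have "\<dots> \<le> \<bar>\<rho>' - \<rho>\<bar> * K" using Kb u j by (intro mult_left_mono) auto
    finally show ?thesis .
  qed
  moreover have "F u - \<rho>' * cst p n uhat j u \<le> HH j \<rho>'" by (rule HH_ge[OF r' j u])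
  ultimately show ?thesis unfolding e by (simp add: algebra_simps)
qed

lemma HH_antimono: "0 \<le> \<rho> \<Longrightarrow> \<rho> \<le> \<rho>' \<Longrightarrow> j \<in> {1..N} \<Longrightarrow> HH j \<rho>' \<le> HH j \<rho>"
proof -
  assume r: "0 \<le> \<rho>" and rr: "\<rho> \<le> \<rho>'" and j: "j \<in> {1..N}"
  obtain u where u: "u \<in> box_set n uL uU" and e: "HH j \<rho>' = F u - \<rho>' * cst p n uhat j u"
    using HH_att[of \<rho>' j] r rr j by auto
  have "\<rho> * cst p n uhat j u \<le> \<rho>' * cst p n uhat j u" using rr cst_nonneg by (intro mult_right_mono) auto
  moreover have "F u - \<rho> * cst p n uhat j u \<le> HH j \<rho>" by (rule HH_ge[OF r j u])
  ultimately show ?thesis unfolding e by simp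
qed

lemma Phi_lip: "0 \<le> \<rho> \<Longrightarrow> 0 \<le> \<rho>' \<Longrightarrow> \<bar>Phi \<rho> - Phi \<rho>'\<bar> \<le> (\<epsilon> ^ p + K) * \<bar>\<rho> - \<rho>'\<bar>"
proof -
  assume r: "0 \<le> \<rho>" and r': "0 \<le> \<rho>'"
  have a1: "Av N (\<lambda>j. HH j \<rho>) - \<bar>\<rho>' - \<rho>\<bar> * K \<le> Av N (\<lambda>j. HH j \<rho>')"
    using Av_mono[of N "\<lambda>j. HH j \<rho> - \<bar>\<rho>' - \<rho>\<bar> * K" "\<lambda>j. HH j \<rho>'"] HH_lip[OF r r']
    by (simp add: Av_diff Av_const[OF N1])
  have a2: "Av N (\<lambda>j. HH j \<rho>') - \<bar>\<rho> - \<rho>'\<bar> * K \<le> Av N (\<lambda>j. HH j \<rho>)"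
    using Av_mono[of N "\<lambda>j. HH j \<rho>' - \<bar>\<rho> - \<rho>'\<bar> * K" "\<lambda>j. HH j \<rho>"] HH_lip[OF r' r]
    by (simp add: Av_diff Av_const[OF N1])
  have ep: "0 \<le> \<epsilon> ^ p" using e0 by simp
  have b1: "\<epsilon> ^ p * (\<rho> - \<rho>') \<le> \<epsilon> ^ p * \<bar>\<rho> - \<rho>'\<bar>" using ep by (intro mult_left_mono) auto
  have b2: "\<epsilon> ^ p * (\<rho>' - \<rho>) \<le> \<epsilon> ^ p * \<bar>\<rho> - \<rho>'\<bar>" using ep by (intro mult_left_mono) auto
  have sym: "\<bar>\<rho>' - \<rho>\<bar> = \<bar>\<rho> - \<rho>'\<bar>" by simp
  have dist: "(\<epsilon> ^ p + K) * \<bar>\<rho> - \<rho>'\<bar> = \<epsilon> ^ p * \<bar>\<rho> - \<rho>'\<bar> + K * \<bar>\<rho> - \<rho>'\<bar>" by (simp add: algebra_simps)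
  have m1: "\<epsilon> ^ p * (\<rho> - \<rho>') = \<epsilon> ^ p * \<rho> - \<epsilon> ^ p * \<rho>'" "\<epsilon> ^ p * (\<rho>' - \<rho>) = \<epsilon> ^ p * \<rho>' - \<epsilon> ^ p * \<rho>"
    by (simp_all add: algebra_simps)
  show ?thesis unfolding Phi_def dist
  proof (rule abs_leI)
    show "\<epsilon> ^ p * \<rho> + Av N (\<lambda>j. HH j \<rho>) - (\<epsilon> ^ p * \<rho>' + Av N (\<lambda>j. HH j \<rho>')) \<le> \<epsilon> ^ p * \<bar>\<rho> - \<rho>'\<bar> + K * \<bar>\<rho> - \<rho>'\<bar>"
      using a1 a2 b1 b2 sym m1 by (simp add: algebra_simps)
    show "- (\<epsilon> ^ p * \<rho> + Av N (\<lambda>j. HH j \<rho>) - (\<epsilon> ^ p * \<rho>' + Av N (\<lambda>j. HH j \<rho>'))) \<le> \<epsilon> ^ p * \<bar>\<rho> - \<rho>'\<bar> + K * \<bar>\<rho> - \<rho>'\<bar>"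
      using a1 a2 b1 b2 sym m1 by (simp add: algebra_simps)
  qed
qed

lemma Phi_cont: "continuous_on {0..} Phi"
proof (rule lipschitz_on_continuous_on)
  show "(\<epsilon> ^ p + K)-lipschitz_on {0..} Phi"
  proof (rule lipschitz_onI)
    fix x y :: real assume "x \<in> {0..}" "y \<in> {0..}"
    then show "dist (Phi x) (Phi y) \<le> (\<epsilon> ^ p + K) * dist x y"
      using Phi_lip by (simp add: dist_real_def)
  next
    show "0 \<le> \<epsilon> ^ p + K" using e0 K0 by simp
  qed
qed

lemma Phi_ge: "0 \<le> \<rho> \<Longrightarrow> \<epsilon> ^ p * \<rho> \<le> Phi \<rho>"
proof -
  assume r: "0 \<le> \<rho>"
  have "0 \<le> Av N (\<lambda>j. HH j \<rho>)" using Av_mono[of N "\<lambda>j. 0" "\<lambda>j. HH j \<rho>"] HH_nonneg[OF r] Av_const[OF N1] by simp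
  then show ?thesis unfolding Phi_def by simp
qed

lemma Phi_min: "\<exists>\<rho>s\<ge>0. \<forall>\<rho>\<ge>0. Phi \<rho>s \<le> Phi \<rho>"
proof -
  define R where "R = Phi 0 / \<epsilon> ^ p"
  have ep: "0 < \<epsilon> ^ p" using e0 by simp
  have R0: "0 \<le> R" unfolding R_def using Phi_ge[of 0] ep by simp
  have "continuous_on {0..R} Phi" using Phi_cont by (rule continuous_on_subset) auto
  then obtain \<rho>s where rs: "\<rho>s \<in> {0..R}" and m: "\<forall>y\<in>{0..R}. Phi \<rho>s \<le> Phi y"
    using continuous_attains_inf[of "{0..R}" Phi] R0 by auto
  have "\<forall>\<rho>\<ge>0. Phi \<rho>s \<le> Phi \<rho>"
  proof (intro allI impI)
    fix \<rho> :: real assume r: "0 \<le> \<rho>"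
    show "Phi \<rho>s \<le> Phi \<rho>"
    proof (cases "\<rho> \<le> R")
      case True then show ?thesis using m r by auto
    next
      case False
      have epn: "\<epsilon> ^ p \<noteq> 0" using ep by (metis less_irrefl)
      have "Phi 0 = \<epsilon> ^ p * R" unfolding R_def using epn by simp
      also have "\<dots> \<le> \<epsilon> ^ p * \<rho>" using False ep by simp
      also have "\<dots> \<le> Phi \<rho>" by (rule Phi_ge[OF r])
      finally have "Phi 0 \<le> Phi \<rho>" .
      moreover have "Phi \<rho>s \<le> Phi 0" using m R0 by simp
      ultimately show ?thesis by linarith
    qed
  qed
  then show ?thesis using rs by auto
qed


lemma Av_le_K: "(\<forall>j\<in>{1..N}. u j \<in> box_set n uL uU) \<Longrightarrow> Av N (\<lambda>j. cst p n uhat j (u j)) \<le> K"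
  using Av_mono[of N "\<lambda>j. cst p n uhat j (u j)" "\<lambda>j. K"] Kb Av_const[OF N1] by auto

lemma lower_step:
  assumes rs: "0 \<le> \<rho>s" and rmin: "\<forall>\<rho>\<ge>0. Phi \<rho>s \<le> Phi \<rho>"
  and d: "0 < \<delta>" and dr: "0 < \<rho>s \<Longrightarrow> \<delta> \<le> \<rho>s"
  shows "\<exists>Q\<in>wball p n uL uU N uhat \<epsilon>. ennreal (Phi \<rho>s - \<delta> * K) \<le> (\<integral>\<^sup>+u. ennreal (F u) \<partial>Q)"
proof -
  have ep: "0 \<le> \<epsilon> ^ p" using e0 by simp
  have "\<forall>j\<in>{1..N}. \<exists>u\<in>box_set n uL uU. HH j (\<rho>s + \<delta>) = F u - (\<rho>s + \<delta>) * cst p n uhat j u"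
    using HH_att rs d by simp
  then obtain up where up: "\<forall>j\<in>{1..N}. up j \<in> box_set n uL uU \<and> HH j (\<rho>s + \<delta>) = F (up j) - (\<rho>s + \<delta>) * cst p n uhat j (up j)"
    by metis
  define Ap where "Ap = Av N (\<lambda>j. cst p n uhat j (up j))"
  have AvHp: "Av N (\<lambda>j. F (up j)) = Av N (\<lambda>j. HH j (\<rho>s + \<delta>)) + (\<rho>s + \<delta>) * Ap"
  proof -
    have "Av N (\<lambda>j. F (up j)) = Av N (\<lambda>j. HH j (\<rho>s + \<delta>) + (\<rho>s + \<delta>) * cst p n uhat j (up j))"
      using up by (intro Av_cong) auto
    then show ?thesis unfolding Ap_def by (simp add: Av_add Av_cmult)
  qed
  have Ap_le: "Ap \<le> \<epsilon> ^ p"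
  proof -
    have "Av N (\<lambda>j. HH j (\<rho>s + \<delta>) + \<delta> * cst p n uhat j (up j)) \<le> Av N (\<lambda>j. HH j \<rho>s)"
    proof (rule Av_mono)
      fix j assume j: "j \<in> {1..N}"
      have "F (up j) - \<rho>s * cst p n uhat j (up j) \<le> HH j \<rho>s" using HH_ge[OF rs j] up j by blast
      moreover have "HH j (\<rho>s + \<delta>) = F (up j) - (\<rho>s + \<delta>) * cst p n uhat j (up j)" using up j by blast
      ultimately show "HH j (\<rho>s + \<delta>) + \<delta> * cst p n uhat j (up j) \<le> HH j \<rho>s" by (simp add: algebra_simps)
    qed
    then have a: "Av N (\<lambda>j. HH j (\<rho>s + \<delta>)) + \<delta> * Ap \<le> Av N (\<lambda>j. HH j \<rho>s)"
      unfolding Ap_def by (simp add: Av_add Av_cmult)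
    have "Phi \<rho>s \<le> Phi (\<rho>s + \<delta>)" using rmin rs d by simp
    then have "\<delta> * Ap \<le> \<delta> * \<epsilon> ^ p" using a unfolding Phi_def by (simp add: algebra_simps)
    then show ?thesis using d by simp
  qed
  have Hlow_p: "Av N (\<lambda>j. HH j \<rho>s) - \<delta> * K \<le> Av N (\<lambda>j. HH j (\<rho>s + \<delta>))"
  proof -
    have "Av N (\<lambda>j. HH j \<rho>s - \<bar>(\<rho>s + \<delta>) - \<rho>s\<bar> * K) \<le> Av N (\<lambda>j. HH j (\<rho>s + \<delta>))"
      using HH_lip[of \<rho>s "\<rho>s + \<delta>"] rs d by (intro Av_mono) auto
    then show ?thesis using d by (simp add: Av_diff Av_const[OF N1])
  qed
  have Ap0: "0 \<le> Ap" unfolding Ap_def using Av_mono[of N "\<lambda>j. 0" "\<lambda>j. cst p n uhat j (up j)"] cst_nonneg Av_const[OF N1] by simp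
  show ?thesis
  proof (cases "\<rho>s = 0")
    case True
    have cb: "(1 / real N) * (\<Sum>j=1..N. 1 * cst p n uhat j (up j) + (1 - 1) * cst p n uhat j (up j)) \<le> \<epsilon> ^ p"
      using Ap_le unfolding Ap_def Av_def by simp
    obtain Q where Q: "Q \<in> wball p n uL uU N uhat \<epsilon>"
      and EQ: "(\<integral>\<^sup>+u. ennreal (F u) \<partial>Q) = ennreal ((1 / real N) * (\<Sum>j=1..N. 1 * F (up j) + (1 - 1) * F (up j)))"
    proof -
      have ub: "\<forall>j\<in>{1..N}. up j \<in> box_set n uL uU \<and> up j \<in> box_set n uL uU" using up by auto
      show ?thesis using construct_Q[OF N1 zero_le_one order_refl ub cb Fm F0] that by blast
    qed
    have "Phi \<rho>s - \<delta> * K \<le> Av N (\<lambda>j. F (up j))"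
    proof -
      have "0 \<le> \<delta> * Ap" using d Ap0 by simp
      then show ?thesis unfolding AvHp Phi_def True using Hlow_p True by simp
    qed
    then have "ennreal (Phi \<rho>s - \<delta> * K) \<le> (\<integral>\<^sup>+u. ennreal (F u) \<partial>Q)"
      unfolding EQ Av_def by (intro ennreal_leI) simp
    then show ?thesis using Q by blast
  next
    case False
    then have rpos: "0 < \<rho>s" using rs by simp
    have dle: "\<delta> \<le> \<rho>s" using dr rpos by simp
    have "\<forall>j\<in>{1..N}. \<exists>u\<in>box_set n uL uU. HH j (\<rho>s - \<delta>) = F u - (\<rho>s - \<delta>) * cst p n uhat j u"
      using HH_att dle by simp
    then obtain um where um: "\<forall>j\<in>{1..N}. um j \<in> box_set n uL uU \<and> HH j (\<rho>s - \<delta>) = F (um j) - (\<rho>s - \<delta>) * cst p n uhat j (um j)"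
      by metis
    define Am where "Am = Av N (\<lambda>j. cst p n uhat j (um j))"
    have AvHm: "Av N (\<lambda>j. F (um j)) = Av N (\<lambda>j. HH j (\<rho>s - \<delta>)) + (\<rho>s - \<delta>) * Am"
    proof -
      have "Av N (\<lambda>j. F (um j)) = Av N (\<lambda>j. HH j (\<rho>s - \<delta>) + (\<rho>s - \<delta>) * cst p n uhat j (um j))"
        using um by (intro Av_cong) auto
      then show ?thesis unfolding Am_def by (simp add: Av_add Av_cmult)
    qed
    have Am_ge: "\<epsilon> ^ p \<le> Am"
    proof -
      have "Av N (\<lambda>j. HH j (\<rho>s - \<delta>) - \<delta> * cst p n uhat j (um j)) \<le> Av N (\<lambda>j. HH j \<rho>s)"
      proof (rule Av_mono)
        fix j assume j: "j \<in> {1..N}"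
        have "F (um j) - \<rho>s * cst p n uhat j (um j) \<le> HH j \<rho>s" using HH_ge[OF rs j] um j by blast
        moreover have "HH j (\<rho>s - \<delta>) = F (um j) - (\<rho>s - \<delta>) * cst p n uhat j (um j)" using um j by blast
        ultimately show "HH j (\<rho>s - \<delta>) - \<delta> * cst p n uhat j (um j) \<le> HH j \<rho>s" by (simp add: algebra_simps)
      qed
      then have a: "Av N (\<lambda>j. HH j (\<rho>s - \<delta>)) - \<delta> * Am \<le> Av N (\<lambda>j. HH j \<rho>s)"
        unfolding Am_def by (simp add: Av_diff Av_cmult)
      have "Phi \<rho>s \<le> Phi (\<rho>s - \<delta>)" using rmin dle by simp
      then have "\<delta> * \<epsilon> ^ p \<le> \<delta> * Am" using a unfolding Phi_def by (simp add: algebra_simps)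
      then show ?thesis using d by simp
    qed
    have AmK: "Am \<le> K" unfolding Am_def using Av_le_K um by auto
    have Hlow_m: "Av N (\<lambda>j. HH j \<rho>s) \<le> Av N (\<lambda>j. HH j (\<rho>s - \<delta>))"
      using HH_antimono[of "\<rho>s - \<delta>" \<rho>s] dle d by (intro Av_mono) auto
    define \<theta> where "\<theta> = (if Am = Ap then 1 else (Am - \<epsilon> ^ p) / (Am - Ap))"
    have th: "0 \<le> \<theta>" "\<theta> \<le> 1" "\<theta> * Ap + (1 - \<theta>) * Am = \<epsilon> ^ p"
    proof -
      show "0 \<le> \<theta>" "\<theta> \<le> 1" unfolding \<theta>_def using Ap_le Am_ge by (auto simp: divide_simps)
      show "\<theta> * Ap + (1 - \<theta>) * Am = \<epsilon> ^ p"
      proof (cases "Am = Ap")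
        case True then show ?thesis unfolding \<theta>_def using Ap_le Am_ge by simp
      next
        case False
        then have nz: "Am - Ap \<noteq> 0" by simp
        have t: "\<theta> = (Am - \<epsilon> ^ p) / (Am - Ap)" unfolding \<theta>_def using False by simp
        have "\<theta> * (Am - Ap) = Am - \<epsilon> ^ p" unfolding t using nz by simp
        moreover have "\<theta> * Ap + (1 - \<theta>) * Am = Am - \<theta> * (Am - Ap)" by (simp add: algebra_simps)
        ultimately show ?thesis by simp
      qed
    qed
    have cb: "(1 / real N) * (\<Sum>j=1..N. \<theta> * cst p n uhat j (up j) + (1 - \<theta>) * cst p n uhat j (um j)) \<le> \<epsilon> ^ p"
    proof -
      have "(1 / real N) * (\<Sum>j=1..N. \<theta> * cst p n uhat j (up j) + (1 - \<theta>) * cst p n uhat j (um j)) = \<theta> * Ap + (1 - \<theta>) * Am"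
        unfolding Ap_def Am_def using Av_add[of N "\<lambda>j. \<theta> * cst p n uhat j (up j)" "\<lambda>j. (1 - \<theta>) * cst p n uhat j (um j)"]
        by (simp add: Av_cmult Av_def)
      then show ?thesis using th by simp
    qed
    obtain Q where Q: "Q \<in> wball p n uL uU N uhat \<epsilon>"
      and EQ: "(\<integral>\<^sup>+u. ennreal (F u) \<partial>Q) = ennreal ((1 / real N) * (\<Sum>j=1..N. \<theta> * F (up j) + (1 - \<theta>) * F (um j)))"
    proof -
      have ub: "\<forall>j\<in>{1..N}. up j \<in> box_set n uL uU \<and> um j \<in> box_set n uL uU" using up um by auto
      show ?thesis using construct_Q[OF N1 th(1,2) ub cb Fm F0] that by blast
    qed
    have EE: "(1 / real N) * (\<Sum>j=1..N. \<theta> * F (up j) + (1 - \<theta>) * F (um j)) = \<theta> * Av N (\<lambda>j. F (up j)) + (1 - \<theta>) * Av N (\<lambda>j. F (um j))"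
      using Av_add[of N "\<lambda>j. \<theta> * F (up j)" "\<lambda>j. (1 - \<theta>) * F (um j)"] by (simp add: Av_cmult Av_def)
    define AH where "AH = Av N (\<lambda>j. HH j \<rho>s)"
    have P1: "AH - \<delta> * K + \<rho>s * Ap \<le> Av N (\<lambda>j. F (up j))"
    proof -
      have "0 \<le> Ap * \<delta>" using d Ap0 by simp
      then show ?thesis unfolding AvHp AH_def using Hlow_p by (simp add: algebra_simps)
    qed
    have P2: "AH - \<delta> * K + \<rho>s * Am \<le> Av N (\<lambda>j. F (um j))"
    proof -
      have "\<delta> * Am \<le> \<delta> * K" using AmK d by simp
      then show ?thesis unfolding AvHm AH_def using Hlow_m by (simp add: algebra_simps)
    qed
    have "\<theta> * (AH - \<delta> * K + \<rho>s * Ap) + (1 - \<theta>) * (AH - \<delta> * K + \<rho>s * Am)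
        \<le> \<theta> * Av N (\<lambda>j. F (up j)) + (1 - \<theta>) * Av N (\<lambda>j. F (um j))"
      using P1 P2 th by (intro add_mono mult_left_mono) auto
    moreover have "\<theta> * (AH - \<delta> * K + \<rho>s * Ap) + (1 - \<theta>) * (AH - \<delta> * K + \<rho>s * Am) = AH - \<delta> * K + \<rho>s * (\<theta> * Ap + (1 - \<theta>) * Am)"
      by (simp add: algebra_simps)
    ultimately have "Phi \<rho>s - \<delta> * K \<le> (1 / real N) * (\<Sum>j=1..N. \<theta> * F (up j) + (1 - \<theta>) * F (um j))"
      unfolding EE Phi_def AH_def[symmetric] th(3) by (simp add: algebra_simps)
    then have "ennreal (Phi \<rho>s - \<delta> * K) \<le> (\<integral>\<^sup>+u. ennreal (F u) \<partial>Q)"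
      unfolding EQ by (intro ennreal_leI)
    then show ?thesis using Q by blast
  qed
qed

lemma dro_value:
  "\<exists>\<rho>s\<ge>0. (\<forall>\<rho>\<ge>0. Phi \<rho>s \<le> Phi \<rho>) \<and>
     (SUP Q\<in>wball p n uL uU N uhat \<epsilon>. enn2ereal (\<integral>\<^sup>+u. ennreal (F u) \<partial>Q)) = ereal (Phi \<rho>s)"
proof -
  obtain \<rho>s where rs: "0 \<le> \<rho>s" and rmin: "\<forall>\<rho>\<ge>0. Phi \<rho>s \<le> Phi \<rho>" using Phi_min by blast
  define W where "W = (SUP Q\<in>wball p n uL uU N uhat \<epsilon>. enn2ereal (\<integral>\<^sup>+u. ennreal (F u) \<partial>Q))"
  have P0: "0 \<le> Phi \<rho>s" using Phi_ge[OF rs] rs e0 by (meson order.trans zero_le_mult_iff zero_le_power less_imp_le)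
  have up: "W \<le> ereal (Phi \<rho>s)"
    unfolding W_def
  proof (rule SUP_least)
    fix Q assume Q: "Q \<in> wball p n uL uU N uhat \<epsilon>"
    have "(\<integral>\<^sup>+u. ennreal (F u) \<partial>Q) \<le> ennreal (\<epsilon> ^ p * \<rho>s + (1 / real N) * (\<Sum>j=1..N. HH j \<rho>s))"
      by (rule upper_int[OF N1 p1 Fm F0 Q e0 rs _ uh]) (use HH_ge rs in blast)
    also have "\<dots> = ennreal (Phi \<rho>s)" unfolding Phi_def Av_def ..
    finally have "enn2ereal (\<integral>\<^sup>+u. ennreal (F u) \<partial>Q) \<le> enn2ereal (ennreal (Phi \<rho>s))"
      by (simp only: less_eq_ennreal.rep_eq[symmetric])
    then show "enn2ereal (\<integral>\<^sup>+u. ennreal (F u) \<partial>Q) \<le> ereal (Phi \<rho>s)" using P0 by simp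
  qed
  define \<delta>0 where "\<delta>0 = (if 0 < \<rho>s then \<rho>s else 1)"
  have d0: "0 < \<delta>0" unfolding \<delta>0_def by simp
  have low: "ereal (Phi \<rho>s - \<delta> * K) \<le> W" if d: "0 < \<delta>" "\<delta> \<le> \<delta>0" for \<delta>
  proof -
    have "0 < \<rho>s \<Longrightarrow> \<delta> \<le> \<rho>s" using d unfolding \<delta>0_def by simp
    then obtain Q where Q: "Q \<in> wball p n uL uU N uhat \<epsilon>"
      and le: "ennreal (Phi \<rho>s - \<delta> * K) \<le> (\<integral>\<^sup>+u. ennreal (F u) \<partial>Q)"
      using lower_step[OF rs rmin d(1)] by blast
    have "ereal (Phi \<rho>s - \<delta> * K) \<le> enn2ereal (ennreal (Phi \<rho>s - \<delta> * K))"
      by (cases "0 \<le> Phi \<rho>s - \<delta> * K") (auto simp: ennreal_neg zero_ennreal.rep_eq)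
    also have "\<dots> \<le> enn2ereal (\<integral>\<^sup>+u. ennreal (F u) \<partial>Q)" using le by (simp only: less_eq_ennreal.rep_eq[symmetric])
    also have "\<dots> \<le> W" unfolding W_def using Q by (rule SUP_upper)
    finally show ?thesis .
  qed
  have "ereal (Phi \<rho>s) \<le> W"
  proof (rule ccontr)
    assume "\<not> ereal (Phi \<rho>s) \<le> W"
    then have Wl: "W < ereal (Phi \<rho>s)" by simp
    have "ereal (Phi \<rho>s - \<delta>0 * K) \<le> W" using low d0 by simp
    then obtain w where w: "W = ereal w" using up by (cases W) auto
    have wl: "w < Phi \<rho>s" using Wl w by simp
    define \<delta> where "\<delta> = min \<delta>0 ((Phi \<rho>s - w) / (K + 1))"
    have dpos: "0 < \<delta>" unfolding \<delta>_def using d0 wl K0 by simp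
    have "\<delta> * K < Phi \<rho>s - w"
    proof -
      have "\<delta> \<le> (Phi \<rho>s - w) / (K + 1)" unfolding \<delta>_def by simp
      then have "\<delta> * (K + 1) \<le> Phi \<rho>s - w" using K0 by (simp add: field_simps)
      then show ?thesis using dpos by (simp add: algebra_simps)
    qed
    moreover have "Phi \<rho>s - \<delta> * K \<le> w" using low[of \<delta>] dpos w unfolding \<delta>_def by simp
    ultimately show False by simp
  qed
  then have "W = ereal (Phi \<rho>s)" using up by simp
  then show ?thesis using rs rmin unfolding W_def by blast
qed

end

lemma assemble:
  fixes W :: "vec \<Rightarrow> ereal" and feas :: "'x \<Rightarrow> bool" and sOf :: "'x \<Rightarrow> vec" and obj :: "'x \<Rightarrow> real"
  assumes A1: "\<forall>x. feas x \<longrightarrow> sOf x \<in> S \<and> W (sOf x) \<le> ereal (obj x)"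
  and A2: "\<forall>s\<in>S. \<exists>x. feas x \<and> sOf x = s \<and> W s = ereal (obj x)"
  shows "(INF s\<in>S. W s) = (INF x\<in>{x. feas x}. ereal (obj x))"
    and "{s\<in>S. W s = (INF s\<in>S. W s)} = {s. \<exists>x. feas x \<and> sOf x = s \<and> ereal (obj x) = (INF x\<in>{x. feas x}. ereal (obj x))}"
proof -
  have le1: "(INF s\<in>S. W s) \<le> (INF x\<in>{x. feas x}. ereal (obj x))"
  proof (rule INF_greatest)
    fix x assume "x \<in> {x. feas x}"
    then have "sOf x \<in> S" "W (sOf x) \<le> ereal (obj x)" using A1 by auto
    then show "(INF s\<in>S. W s) \<le> ereal (obj x)" by (meson INF_lower order.trans)
  qed
  have le2: "(INF x\<in>{x. feas x}. ereal (obj x)) \<le> (INF s\<in>S. W s)"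
  proof (rule INF_greatest)
    fix s assume "s \<in> S"
    then obtain x where "feas x" "W s = ereal (obj x)" using A2 by blast
    then show "(INF x\<in>{x. feas x}. ereal (obj x)) \<le> W s" by (metis INF_lower mem_Collect_eq)
  qed
  show eq: "(INF s\<in>S. W s) = (INF x\<in>{x. feas x}. ereal (obj x))" using le1 le2 by (rule antisym)
  show "{s\<in>S. W s = (INF s\<in>S. W s)} = {s. \<exists>x. feas x \<and> sOf x = s \<and> ereal (obj x) = (INF x\<in>{x. feas x}. ereal (obj x))}"
  proof (intro set_eqI iffI)
    fix s assume "s \<in> {s\<in>S. W s = (INF s\<in>S. W s)}"
    then have s: "s \<in> S" "W s = (INF s\<in>S. W s)" by auto
    then obtain x where "feas x" "sOf x = s" "W s = ereal (obj x)" using A2 by blast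
    then show "s \<in> {s. \<exists>x. feas x \<and> sOf x = s \<and> ereal (obj x) = (INF x\<in>{x. feas x}. ereal (obj x))}"
      using s eq by auto
  next
    fix s assume "s \<in> {s. \<exists>x. feas x \<and> sOf x = s \<and> ereal (obj x) = (INF x\<in>{x. feas x}. ereal (obj x))}"
    then obtain x where x: "feas x" "sOf x = s" "ereal (obj x) = (INF x\<in>{x. feas x}. ereal (obj x))" by auto
    then have sS: "s \<in> S" and Wl: "W s \<le> ereal (obj x)" using A1 by auto
    have "(INF s\<in>S. W s) \<le> W s" using sS by (rule INF_lower)
    then have "W s = (INF s\<in>S. W s)" using Wl x(3) eq by simp
    then show "s \<in> {s\<in>S. W s = (INF s\<in>S. W s)}" using sS by simp
  qed
qed

lemma cst_le_K:
  assumes "u \<in> box_set n uL uU" "v \<in> box_set n uL uU"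
  shows "(\<Sum>i=1..n. \<bar>u i - v i\<bar> ^ p) \<le> (\<Sum>i=1..n. (uU i - uL i) ^ p)"
proof (rule sum_mono)
  fix i assume "i \<in> {1..n}"
  then have "uL i \<le> u i \<and> u i \<le> uU i" "uL i \<le> v i \<and> v i \<le> uU i" using assms unfolding box_set_def by auto
  then have "\<bar>u i - v i\<bar> \<le> uU i - uL i" by (simp add: abs_le_iff)
  then show "\<bar>u i - v i\<bar> ^ p \<le> (uU i - uL i) ^ p" by (intro power_mono) auto
qed

lemma final_generic:
  fixes feas :: "'x \<Rightarrow> bool" and sOf :: "'x \<Rightarrow> vec" and rOf :: "'x \<Rightarrow> real" and gOf :: "'x \<Rightarrow> nat \<Rightarrow> nat \<Rightarrow> real"
  assumes n1: "1 \<le> n" and N1: "1 \<le> N" and p1: "1 \<le> p"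
    and c0: "\<forall>i\<in>{1..n}. 0 \<le> c i" and d0: "\<forall>i\<in>{1..n}. 0 \<le> d i" and C0: "0 \<le> C"
    and tel: "\<forall>i\<in>{1..n-1}. d (i+1) - d i \<le> c (i+1)"
    and uh: "\<forall>j\<in>{1..N}. uhat j \<in> box_set n uL uU"
    and e0: "0 < \<epsilon>"
  and K1: "\<forall>x. feas x \<longrightarrow> sOf x \<in> schedules n T \<and> 0 \<le> rOf x \<and>
     (\<forall>j\<in>{1..N}. \<forall>u\<in>box_set n uL uU. fval n c d C (sOf x) u - rOf x * cst p n uhat j u \<le> (\<Sum>i=1..n. gOf x i j))"
  and K2: "\<forall>s\<in>schedules n T. \<forall>\<rho>\<ge>0. \<exists>x. feas x \<and> sOf x = s \<and> rOf x = \<rho> \<and>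
     (\<forall>j\<in>{1..N}. \<exists>u\<in>box_set n uL uU. (\<Sum>i=1..n. gOf x i j) \<le> fval n c d C s u - \<rho> * cst p n uhat j u)"
  shows "dras_val n c d C T p uL uU N uhat \<epsilon> = (INF x\<in>{x. feas x}. ereal (\<epsilon> ^ p * rOf x + (1 / real N) * (\<Sum>j=1..N. \<Sum>i=1..n. gOf x i j)))"
    and "dras_opt n c d C T p uL uU N uhat \<epsilon> = {s. \<exists>x. feas x \<and> sOf x = s \<and>
       ereal (\<epsilon> ^ p * rOf x + (1 / real N) * (\<Sum>j=1..N. \<Sum>i=1..n. gOf x i j)) =
       (INF x\<in>{x. feas x}. ereal (\<epsilon> ^ p * rOf x + (1 / real N) * (\<Sum>j=1..N. \<Sum>i=1..n. gOf x i j)))}"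
proof -
  define obj where "obj = (\<lambda>x. \<epsilon> ^ p * rOf x + (1 / real N) * (\<Sum>j=1..N. \<Sum>i=1..n. gOf x i j))"
  define K where "K = (\<Sum>i=1..n. (uU i - uL i) ^ p)"
  define W where "W = worst_exp n c d C p uL uU N uhat \<epsilon>"
  have Kb: "\<forall>j\<in>{1..N}. \<forall>u\<in>box_set n uL uU. cst p n uhat j u \<le> K"
    unfolding K_def cst_def using uh cst_le_K by blast
  have Fm: "\<And>s. (\<lambda>u. fval n c d C s u) \<in> borel_measurable borel" by (rule fval_measurable[OF n1 c0 d0 C0 tel])
  have F0: "\<And>s. \<forall>u. 0 \<le> fval n c d C s u" using fval_nonneg[OF c0 d0 C0] by blast
  have Att: "\<forall>\<rho>\<ge>0. \<forall>j\<in>{1..N}. \<exists>u\<in>box_set n uL uU. \<forall>v\<in>box_set n uL uU.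
     fval n c d C s v - \<rho> * cst p n uhat j v \<le> fval n c d C s u - \<rho> * cst p n uhat j u" if s: "s \<in> schedules n T" for s
  proof (intro allI impI ballI)
    fix \<rho> :: real and j assume r: "0 \<le> \<rho>" and j: "j \<in> {1..N}"
    obtain x where x: "feas x" "sOf x = s" "rOf x = \<rho>"
      and xu: "\<forall>j\<in>{1..N}. \<exists>u\<in>box_set n uL uU. (\<Sum>i=1..n. gOf x i j) \<le> fval n c d C s u - \<rho> * cst p n uhat j u"
      using K2 s r by blast
    obtain u where u: "u \<in> box_set n uL uU" and ul: "(\<Sum>i=1..n. gOf x i j) \<le> fval n c d C s u - \<rho> * cst p n uhat j u"
      using xu j by blast
    have "\<forall>v\<in>box_set n uL uU. fval n c d C s v - \<rho> * cst p n uhat j v \<le> (\<Sum>i=1..n. gOf x i j)"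
      using K1 x j by auto
    then show "\<exists>u\<in>box_set n uL uU. \<forall>v\<in>box_set n uL uU.
      fval n c d C s v - \<rho> * cst p n uhat j v \<le> fval n c d C s u - \<rho> * cst p n uhat j u"
      using u ul by force
  qed
  have HHle: "HH (fval n c d C s) p n uL uU uhat j \<rho> \<le> (\<Sum>i=1..n. gOf x i j)"
    if x: "feas x" "sOf x = s" "rOf x = \<rho>" and j: "j \<in> {1..N}" for x s \<rho> j
  proof -
    have ne: "box_set n uL uU \<noteq> {}" using uh j by blast
    have s: "s \<in> schedules n T" using K1 x by auto
    show ?thesis unfolding HH_def[OF N1 p1 e0 Fm F0 uh Kb Att[OF s]] using ne K1 x j by (intro cSup_least) auto
  qed
  have main: "\<exists>\<rho>s\<ge>0. (\<forall>\<rho>\<ge>0. Phi (fval n c d C s) p n N uL uU uhat \<epsilon> \<rho>s \<le> Phi (fval n c d C s) p n N uL uU uhat \<epsilon> \<rho>)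
      \<and> W s = ereal (Phi (fval n c d C s) p n N uL uU uhat \<epsilon> \<rho>s)" if s: "s \<in> schedules n T" for s
    unfolding W_def worst_exp_def
    by (rule dro_value[OF N1 p1 e0 Fm F0 uh Kb Att[OF s]])
  have objge: "Phi (fval n c d C s) p n N uL uU uhat \<epsilon> \<rho> \<le> obj x"
    if x: "feas x" "sOf x = s" "rOf x = \<rho>" for x s \<rho>
  proof -
    have s: "s \<in> schedules n T" and r: "0 \<le> \<rho>" using K1 x by auto
    have "Av N (\<lambda>j. HH (fval n c d C s) p n uL uU uhat j \<rho>) \<le> Av N (\<lambda>j. \<Sum>i=1..n. gOf x i j)"
      using HHle[OF x] by (intro Av_mono) auto
    then show ?thesis
      unfolding Phi_def[OF N1 p1 e0 Fm F0 uh Kb Att[OF s]] obj_def Av_def using x by simp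
  qed
  have A1: "\<forall>x. feas x \<longrightarrow> sOf x \<in> schedules n T \<and> W (sOf x) \<le> ereal (obj x)"
  proof (intro allI impI conjI)
    fix x assume x: "feas x"
    show s: "sOf x \<in> schedules n T" using K1 x by auto
    obtain \<rho>s where "0 \<le> \<rho>s" and m: "\<forall>\<rho>\<ge>0. Phi (fval n c d C (sOf x)) p n N uL uU uhat \<epsilon> \<rho>s \<le> Phi (fval n c d C (sOf x)) p n N uL uU uhat \<epsilon> \<rho>"
      and w: "W (sOf x) = ereal (Phi (fval n c d C (sOf x)) p n N uL uU uhat \<epsilon> \<rho>s)"
      using main[OF s] by blast
    have "0 \<le> rOf x" using K1 x by auto
    then have "Phi (fval n c d C (sOf x)) p n N uL uU uhat \<epsilon> \<rho>s \<le> obj x"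
      using m objge[OF x refl refl] by (meson order.trans)
    then show "W (sOf x) \<le> ereal (obj x)" unfolding w by simp
  qed
  have A2: "\<forall>s\<in>schedules n T. \<exists>x. feas x \<and> sOf x = s \<and> W s = ereal (obj x)"
  proof
    fix s assume s: "s \<in> schedules n T"
    obtain \<rho>s where rs: "0 \<le> \<rho>s"
      and w: "W s = ereal (Phi (fval n c d C s) p n N uL uU uhat \<epsilon> \<rho>s)"
      using main[OF s] by blast
    obtain x where x: "feas x" "sOf x = s" "rOf x = \<rho>s"
      and xu: "\<forall>j\<in>{1..N}. \<exists>u\<in>box_set n uL uU. (\<Sum>i=1..n. gOf x i j) \<le> fval n c d C s u - \<rho>s * cst p n uhat j u"
      using K2 s rs by blast
    have "Av N (\<lambda>j. \<Sum>i=1..n. gOf x i j) \<le> Av N (\<lambda>j. HH (fval n c d C s) p n uL uU uhat j \<rho>s)"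
    proof (rule Av_mono)
      fix j assume j: "j \<in> {1..N}"
      obtain u where u: "u \<in> box_set n uL uU" and ul: "(\<Sum>i=1..n. gOf x i j) \<le> fval n c d C s u - \<rho>s * cst p n uhat j u"
        using xu j by blast
      show "(\<Sum>i=1..n. gOf x i j) \<le> HH (fval n c d C s) p n uL uU uhat j \<rho>s"
        using ul HH_ge[OF N1 p1 e0 Fm F0 uh Kb Att[OF s] rs j u] by simp
    qed
    then have "obj x \<le> Phi (fval n c d C s) p n N uL uU uhat \<epsilon> \<rho>s"
      unfolding Phi_def[OF N1 p1 e0 Fm F0 uh Kb Att[OF s]] obj_def Av_def using x by simp
    moreover have "Phi (fval n c d C s) p n N uL uU uhat \<epsilon> \<rho>s \<le> obj x" by (rule objge[OF x])
    ultimately have "W s = ereal (obj x)" using w by simp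
    then show "\<exists>x. feas x \<and> sOf x = s \<and> W s = ereal (obj x)" using x by blast
  qed
  show "dras_val n c d C T p uL uU N uhat \<epsilon> = (INF x\<in>{x. feas x}. ereal (\<epsilon> ^ p * rOf x + (1 / real N) * (\<Sum>j=1..N. \<Sum>i=1..n. gOf x i j)))"
    using assemble(1)[OF A1 A2] unfolding dras_val_def W_def obj_def .
  show "dras_opt n c d C T p uL uU N uhat \<epsilon> = {s. \<exists>x. feas x \<and> sOf x = s \<and>
       ereal (\<epsilon> ^ p * rOf x + (1 / real N) * (\<Sum>j=1..N. \<Sum>i=1..n. gOf x i j)) =
       (INF x\<in>{x. feas x}. ereal (\<epsilon> ^ p * rOf x + (1 / real N) * (\<Sum>j=1..N. \<Sum>i=1..n. gOf x i j)))}"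
    using assemble(2)[OF A1 A2] unfolding dras_opt_def dras_val_def W_def obj_def .
qed

lemma lp1_K1:
  assumes c0: "\<forall>i\<in>{1..n}. 0 \<le> c i" and d0: "\<forall>i\<in>{1..n}. 0 \<le> d i" and C0: "0 \<le> C"
  and uh: "\<forall>j\<in>{1..N}. uhat j \<in> box_set n uL uU"
  and F: "lp1_feas n c d C T uL uU N uhat \<rho> s \<gamma> z"
  shows "s \<in> schedules n T \<and> 0 \<le> \<rho> \<and> (\<forall>j\<in>{1..N}. \<forall>u\<in>box_set n uL uU.
     fval n c d C s u - \<rho> * cst 1 n uhat j u \<le> (\<Sum>i=1..n. \<gamma> i j))"
proof (intro conjI ballI)
  show "s \<in> schedules n T" "0 \<le> \<rho>" using F unfolding lp1_feas_def by auto
  fix j u assume j: "j \<in> {1..N}" and u: "u \<in> box_set n uL uU"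
  have "fval n c d C s u - \<rho> * (\<Sum>q=1..n. \<bar>u q - uhat j q\<bar>) \<le> (\<Sum>q=1..n. \<gamma> q j)"
  proof (rule K1gen[OF c0 d0 C0, where zz="\<lambda>k l. z k l j"])
    show "\<forall>i\<in>{1..n}. \<forall>l\<in>{i..n+1}. (\<Sum>k=i..min l n. z k l j) \<le> (\<Sum>k=i..min l n. \<gamma> k j)"
      using F j unfolding lp1_feas_def by blast
    show "\<forall>q\<in>{1..n}. \<forall>l\<in>{q..n+1}. pic n c d C q l * (u q - s q) - \<rho> * \<bar>u q - uhat j q\<bar> \<le> z q l j"
    proof (intro ballI)
      fix q l assume q: "q \<in> {1..n}" and l: "l \<in> {q..n+1}"
      have c: "z q l j + pic n c d C q l * s q + \<bar>uL q - uhat j q\<bar> * \<rho> \<ge> pic n c d C q l * uL q \<and>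
        z q l j + pic n c d C q l * s q \<ge> pic n c d C q l * uhat j q \<and>
        z q l j + pic n c d C q l * s q + \<bar>uU q - uhat j q\<bar> * \<rho> \<ge> pic n c d C q l * uU q"
        using F q l j unfolding lp1_feas_def by blast
      have r: "0 \<le> \<rho>" using F unfolding lp1_feas_def by auto
      have b: "uL q \<le> u q" "u q \<le> uU q" "uL q \<le> uhat j q" "uhat j q \<le> uU q"
        using u uh j q unfolding box_set_def by auto
      show "pic n c d C q l * (u q - s q) - \<rho> * \<bar>u q - uhat j q\<bar> \<le> z q l j"
        using coord1[OF b r] c by blast
    qed
  qed
  then show "fval n c d C s u - \<rho> * cst 1 n uhat j u \<le> (\<Sum>i=1..n. \<gamma> i j)"
    unfolding cst_def by simp
qed

lemma sum_dpv_tel: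
  "1 \<le> n \<Longrightarrow> (\<Sum>i=1..n. dpv a n i - dpv a n (Suc i)) = dpv a n 1"
  using dpv_tel[of 1 n a n] by (simp add: dpv_out)

lemma dpv_gamma_feas:
  assumes "i \<in> {1..n}" "l \<in> {i..n+1}"
  shows "(\<Sum>k=i..min l n. a k l) \<le> (\<Sum>k=i..min l n. dpv a n k - dpv a n (Suc k))"
proof -
  have "(\<Sum>k=i..min l n. a k l) \<le> dpv a n i - dpv a n (Suc (min l n))"
    using dpv_ge[of i n l a] assms by auto
  also have "\<dots> = (\<Sum>k=i..min l n. dpv a n k - dpv a n (Suc k))"
    using dpv_tel[of i "min l n" a n] assms by (simp add: min_def)
  finally show ?thesis .
qed

lemma att_from_T:
  fixes A :: "nat \<Rightarrow> nat \<Rightarrow> real \<Rightarrow> real" and Tt :: "nat \<Rightarrow> nat \<Rightarrow> real" and e :: "nat \<Rightarrow> real \<Rightarrow> real"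
  assumes n1: "1 \<le> n" and c0: "\<forall>i\<in>{1..n}. 0 \<le> c i" and d0: "\<forall>i\<in>{1..n}. 0 \<le> d i" and C0: "0 \<le> C"
  and tel: "\<forall>i\<in>{1..n-1}. d (i+1) - d i \<le> c (i+1)"
  and TB: "\<forall>q\<in>{1..n}. \<forall>l\<in>{q..n+1}. uL q \<le> Tt q l \<and> Tt q l \<le> uU q"
  and Adef: "\<And>q l t. A q l t = pic n c d C q l * (t - s q) - \<rho> * e q t"
  shows "\<exists>u\<in>box_set n uL uU. dpv (\<lambda>q l. A q l (Tt q l)) n 1 \<le> fval n c d C s u - \<rho> * (\<Sum>q=1..n. e q (u q))"
proof -
  obtain u where u1: "\<forall>q\<in>{1..n}. uL q \<le> u q \<and> u q \<le> uU q" and u2: "\<forall>q. q \<notin> {1..n} \<longrightarrow> u q = 0"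
    and u3: "dpv (\<lambda>q l. A q l (Tt q l)) n 1 \<le> dpv (\<lambda>q l. A q l (u q)) n 1"
    using exists_u[OF TB, of A] by blast
  have "dpv (\<lambda>q l. A q l (u q)) n 1 = dpv (\<lambda>q l. pic n c d C q l * (u q - s q) - \<rho> * e q (u q)) n 1"
    unfolding Adef ..
  also have "\<dots> = dpv (\<lambda>q l. pic n c d C q l * (u q - s q)) n 1 - (\<Sum>q=1..n. \<rho> * e q (u q))"
    by (rule dpv_shift) simp
  also have "\<dots> = fval n c d C s u - \<rho> * (\<Sum>q=1..n. e q (u q))"
    by (simp add: fval_eq_dpv[OF n1 c0 d0 C0 tel] sum_distrib_left)
  finally have "dpv (\<lambda>q l. A q l (Tt q l)) n 1 \<le> fval n c d C s u - \<rho> * (\<Sum>q=1..n. e q (u q))" using u3 by simp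
  moreover have "u \<in> box_set n uL uU" using u1 u2 unfolding box_set_iff by blast
  ultimately show ?thesis by blast
qed

lemma lp1_K2:
  assumes n1: "1 \<le> n" and c0: "\<forall>i\<in>{1..n}. 0 \<le> c i" and d0: "\<forall>i\<in>{1..n}. 0 \<le> d i" and C0: "0 \<le> C"
  and tel: "\<forall>i\<in>{1..n-1}. d (i+1) - d i \<le> c (i+1)"
  and uh: "\<forall>j\<in>{1..N}. uhat j \<in> box_set n uL uU"
  and s: "s \<in> schedules n T" and r: "0 \<le> \<rho>"
  shows "\<exists>\<gamma> z. lp1_feas n c d C T uL uU N uhat \<rho> s \<gamma> z \<and>
     (\<forall>j\<in>{1..N}. \<exists>u\<in>box_set n uL uU. (\<Sum>i=1..n. \<gamma> i j) \<le> fval n c d C s u - \<rho> * cst 1 n uhat j u)"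
proof -
  define f where "f = (\<lambda>j q l t. pic n c d C q l * (t - s q) - \<rho> * \<bar>t - uhat j q\<bar>)"
  define Tt where "Tt = (\<lambda>q l j. t1 (pic n c d C q l) (s q) (uL q) (uhat j q) (uU q) \<rho>)"
  define z where "z = (\<lambda>q l j. f j q l (Tt q l j))"
  define \<gamma> where "\<gamma> = (\<lambda>q j. dpv (\<lambda>q l. z q l j) n q - dpv (\<lambda>q l. z q l j) n (Suc q))"
  have hb: "\<And>j q. j \<in> {1..N} \<Longrightarrow> q \<in> {1..n} \<Longrightarrow> uL q \<le> uhat j q \<and> uhat j q \<le> uU q"
    using uh unfolding box_set_def by auto
  have tp: "\<And>j q l. j \<in> {1..N} \<Longrightarrow> q \<in> {1..n} \<Longrightarrow> uL q \<le> Tt q l j \<and> Tt q l j \<le> uU q \<and>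
      f j q l (uL q) \<le> z q l j \<and> f j q l (uhat j q) \<le> z q l j \<and> f j q l (uU q) \<le> z q l j"
    unfolding z_def Tt_def f_def using hb t1_props by blast
  have feas: "lp1_feas n c d C T uL uU N uhat \<rho> s \<gamma> z"
    unfolding lp1_feas_def
  proof (intro conjI ballI s r)
    fix i l j assume i: "i \<in> {1..n}" and l: "l \<in> {i..n+1}" and j: "j \<in> {1..N}"
    show "(\<Sum>k=i..min l n. \<gamma> k j) \<ge> (\<Sum>k=i..min l n. z k l j)"
      unfolding \<gamma>_def by (rule dpv_gamma_feas[OF i l])
    have t: "f j i l (uL i) \<le> z i l j" "f j i l (uhat j i) \<le> z i l j" "f j i l (uU i) \<le> z i l j"
      using tp[OF j i] by auto
    show "z i l j + pic n c d C i l * s i + \<bar>uL i - uhat j i\<bar> * \<rho> \<ge> pic n c d C i l * uL i"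
      using t(1) unfolding f_def by (simp add: algebra_simps)
    show "z i l j + pic n c d C i l * s i \<ge> pic n c d C i l * uhat j i"
      using t(2) unfolding f_def by (simp add: algebra_simps)
    show "z i l j + pic n c d C i l * s i + \<bar>uU i - uhat j i\<bar> * \<rho> \<ge> pic n c d C i l * uU i"
      using t(3) unfolding f_def by (simp add: algebra_simps)
  qed
  have att: "\<forall>j\<in>{1..N}. \<exists>u\<in>box_set n uL uU. (\<Sum>i=1..n. \<gamma> i j) \<le> fval n c d C s u - \<rho> * cst 1 n uhat j u"
  proof
    fix j assume j: "j \<in> {1..N}"
    have TB: "\<forall>q\<in>{1..n}. \<forall>l\<in>{q..n+1}. uL q \<le> Tt q l j \<and> Tt q l j \<le> uU q" using tp[OF j] by blast
    obtain u where u: "u \<in> box_set n uL uU"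
      and le: "dpv (\<lambda>q l. f j q l (Tt q l j)) n 1 \<le> fval n c d C s u - \<rho> * (\<Sum>q=1..n. \<bar>u q - uhat j q\<bar>)"
      using att_from_T[OF n1 c0 d0 C0 tel TB, of "f j" s \<rho> "\<lambda>q t. \<bar>t - uhat j q\<bar>"] unfolding f_def by blast
    have "(\<Sum>i=1..n. \<gamma> i j) = dpv (\<lambda>q l. z q l j) n 1" unfolding \<gamma>_def using n1 by (rule sum_dpv_tel)
    then show "\<exists>u\<in>box_set n uL uU. (\<Sum>i=1..n. \<gamma> i j) \<le> fval n c d C s u - \<rho> * cst 1 n uhat j u"
      using u le unfolding z_def cst_def by auto
  qed
  show ?thesis using feas att by blast
qed

lemma socp_K1:
  assumes c0: "\<forall>i\<in>{1..n}. 0 \<le> c i" and d0: "\<forall>i\<in>{1..n}. 0 \<le> d i" and C0: "0 \<le> C"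
  and uh: "\<forall>j\<in>{1..N}. uhat j \<in> box_set n uL uU"
  and F: "socp_feas n c d C T uL uU N uhat \<rho> s \<gamma> z bL bU r"
  shows "s \<in> schedules n T \<and> 0 \<le> \<rho> \<and> (\<forall>j\<in>{1..N}. \<forall>u\<in>box_set n uL uU.
     fval n c d C s u - \<rho> * cst 2 n uhat j u \<le> (\<Sum>i=1..n. \<gamma> i j))"
proof (intro conjI ballI)
  show "s \<in> schedules n T" "0 \<le> \<rho>" using F unfolding socp_feas_def by auto
  fix j u assume j: "j \<in> {1..N}" and u: "u \<in> box_set n uL uU"
  have "fval n c d C s u - \<rho> * (\<Sum>q=1..n. \<bar>u q - uhat j q\<bar> ^ 2) \<le> (\<Sum>q=1..n. \<gamma> q j)"
  proof (rule K1gen[OF c0 d0 C0, where zz="\<lambda>k l. z k l j"])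
    show "\<forall>i\<in>{1..n}. \<forall>l\<in>{i..n+1}. (\<Sum>k=i..min l n. z k l j) \<le> (\<Sum>k=i..min l n. \<gamma> k j)"
      using F j unfolding socp_feas_def by blast
    show "\<forall>q\<in>{1..n}. \<forall>l\<in>{q..n+1}. pic n c d C q l * (u q - s q) - \<rho> * \<bar>u q - uhat j q\<bar> ^ 2 \<le> z q l j"
    proof (intro ballI)
      fix q l assume q: "q \<in> {1..n}" and l: "l \<in> {q..n+1}"
      have c: "z q l j + pic n c d C q l * s q - (uU q - uhat j q) * bU q l j
          - (uhat j q - uL q) * bL q l j - r q l j \<ge> pic n c d C q l * uhat j q \<and>
        sqrt ((pic n c d C q l + bL q l j - bU q l j)\<^sup>2 + (r q l j - \<rho>)\<^sup>2) \<le> r q l j + \<rho> \<and>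
        0 \<le> bL q l j \<and> 0 \<le> bU q l j"
        using F q l j unfolding socp_feas_def by blast
      have r0: "0 \<le> \<rho>" using F unfolding socp_feas_def by auto
      have b: "uL q \<le> u q" "u q \<le> uU q"
        using u q unfolding box_set_def by auto
      show "pic n c d C q l * (u q - s q) - \<rho> * \<bar>u q - uhat j q\<bar> ^ 2 \<le> z q l j"
        using coord2[where pi="pic n c d C q l" and s="s q" and h="uhat j q" and z="z q l j" and bL="bL q l j" and bU="bU q l j" and r="r q l j", OF b r0] c by blast
    qed
  qed
  then show "fval n c d C s u - \<rho> * cst 2 n uhat j u \<le> (\<Sum>i=1..n. \<gamma> i j)"
    unfolding cst_def by simp
qed

lemma socp_K2:
  assumes n1: "1 \<le> n" and c0: "\<forall>i\<in>{1..n}. 0 \<le> c i" and d0: "\<forall>i\<in>{1..n}. 0 \<le> d i" and C0: "0 \<le> C"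
  and tel: "\<forall>i\<in>{1..n-1}. d (i+1) - d i \<le> c (i+1)"
  and LU: "\<forall>i\<in>{1..n}. 0 \<le> uL i \<and> uL i < uU i"
  and uh: "\<forall>j\<in>{1..N}. uhat j \<in> box_set n uL uU"
  and s: "s \<in> schedules n T" and r: "0 \<le> \<rho>"
  shows "\<exists>\<gamma> z bL bU rr. socp_feas n c d C T uL uU N uhat \<rho> s \<gamma> z bL bU rr \<and>
     (\<forall>j\<in>{1..N}. \<exists>u\<in>box_set n uL uU. (\<Sum>i=1..n. \<gamma> i j) \<le> fval n c d C s u - \<rho> * cst 2 n uhat j u)"
proof -
  define f where "f = (\<lambda>j q l t. pic n c d C q l * (t - s q) - \<rho> * \<bar>t - uhat j q\<bar> ^ 2)"
  define P where "P = (\<lambda>q l j (x :: real \<times> real \<times> real \<times> real).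
     uL q \<le> fst x \<and> fst x \<le> uU q \<and> 0 \<le> fst (snd x) \<and> 0 \<le> fst (snd (snd x)) \<and>
     f j q l (fst x) + pic n c d C q l * s q - (uU q - uhat j q) * fst (snd (snd x))
       - (uhat j q - uL q) * fst (snd x) - snd (snd (snd x)) \<ge> pic n c d C q l * uhat j q \<and>
     sqrt ((pic n c d C q l + fst (snd x) - fst (snd (snd x)))\<^sup>2 + (snd (snd (snd x)) - \<rho>)\<^sup>2) \<le> snd (snd (snd x)) + \<rho>)"
  define cert where "cert = (\<lambda>q l j. SOME x. P q l j x)"
  have Pc: "P q l j (cert q l j)" if j: "j \<in> {1..N}" and q: "q \<in> {1..n}" for q l j
  proof -
    have h: "uL q < uU q" "uL q \<le> uhat j q" "uhat j q \<le> uU q"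
      using LU uh j q unfolding box_set_def by auto
    obtain t b1 b2 rr where "uL q \<le> t \<and> t \<le> uU q \<and> 0 \<le> b1 \<and> 0 \<le> b2 \<and>
      (pic n c d C q l * (t - s q) - \<rho> * \<bar>t - uhat j q\<bar> ^ 2) + pic n c d C q l * s q - (uU q - uhat j q) * b2 - (uhat j q - uL q) * b1 - rr \<ge> pic n c d C q l * uhat j q \<and>
      sqrt ((pic n c d C q l + b1 - b2)\<^sup>2 + (rr - \<rho>)\<^sup>2) \<le> rr + \<rho>"
      using coord2_cert[OF h r, of "pic n c d C q l" "s q"] by blast
    then have "P q l j (t, b1, b2, rr)" unfolding P_def f_def by simp
    then show ?thesis unfolding cert_def by (rule someI)
  qed
  define Tt where "Tt = (\<lambda>q l j. fst (cert q l j))"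
  define bL where "bL = (\<lambda>q l j. fst (snd (cert q l j)))"
  define bU where "bU = (\<lambda>q l j. fst (snd (snd (cert q l j))))"
  define rr where "rr = (\<lambda>q l j. snd (snd (snd (cert q l j))))"
  define z where "z = (\<lambda>q l j. f j q l (Tt q l j))"
  define \<gamma> where "\<gamma> = (\<lambda>q j. dpv (\<lambda>q l. z q l j) n q - dpv (\<lambda>q l. z q l j) n (Suc q))"
  have feas: "socp_feas n c d C T uL uU N uhat \<rho> s \<gamma> z bL bU rr"
    unfolding socp_feas_def
  proof (intro conjI ballI s r)
    fix i l j assume i: "i \<in> {1..n}" and l: "l \<in> {i..n+1}" and j: "j \<in> {1..N}"
    show "(\<Sum>k=i..min l n. \<gamma> k j) \<ge> (\<Sum>k=i..min l n. z k l j)"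
      unfolding \<gamma>_def by (rule dpv_gamma_feas[OF i l])
    have PP: "P i l j (cert i l j)" by (rule Pc[OF j i])
    show "z i l j + pic n c d C i l * s i - (uU i - uhat j i) * bU i l j
          - (uhat j i - uL i) * bL i l j - rr i l j \<ge> pic n c d C i l * uhat j i"
      using PP unfolding P_def z_def Tt_def bL_def bU_def rr_def by blast
    show "sqrt ((pic n c d C i l + bL i l j - bU i l j)\<^sup>2 + (rr i l j - \<rho>)\<^sup>2) \<le> rr i l j + \<rho>"
      using PP unfolding P_def bL_def bU_def rr_def by blast
    show "0 \<le> bL i l j" "0 \<le> bU i l j"
      using PP unfolding P_def bL_def bU_def by blast+
  qed
  have att: "\<forall>j\<in>{1..N}. \<exists>u\<in>box_set n uL uU. (\<Sum>i=1..n. \<gamma> i j) \<le> fval n c d C s u - \<rho> * cst 2 n uhat j u"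
  proof
    fix j assume j: "j \<in> {1..N}"
    have TB: "\<forall>q\<in>{1..n}. \<forall>l\<in>{q..n+1}. uL q \<le> Tt q l j \<and> Tt q l j \<le> uU q"
      using Pc[OF j] unfolding P_def Tt_def by blast
    obtain u where u: "u \<in> box_set n uL uU"
      and le: "dpv (\<lambda>q l. f j q l (Tt q l j)) n 1 \<le> fval n c d C s u - \<rho> * (\<Sum>q=1..n. \<bar>u q - uhat j q\<bar> ^ 2)"
      using att_from_T[OF n1 c0 d0 C0 tel TB, of "f j" s \<rho> "\<lambda>q t. \<bar>t - uhat j q\<bar> ^ 2"] unfolding f_def by blast
    have "(\<Sum>i=1..n. \<gamma> i j) = dpv (\<lambda>q l. z q l j) n 1" unfolding \<gamma>_def using n1 by (rule sum_dpv_tel)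
    then show "\<exists>u\<in>box_set n uL uU. (\<Sum>i=1..n. \<gamma> i j) \<le> fval n c d C s u - \<rho> * cst 2 n uhat j u"
      using u le unfolding z_def cst_def by auto
  qed
  show ?thesis using feas att by blast
qed

theorem theorem4:
  fixes n N :: nat and T C \<epsilon> :: real and c d uL uU :: "nat \<Rightarrow> real"
    and uhat :: "nat \<Rightarrow> nat \<Rightarrow> real"
  assumes "1 \<le> n" and "1 \<le> N" and "0 < T"
    and "\<forall>i\<in>{1..n}. 0 \<le> c i" and "\<forall>i\<in>{1..n}. 0 \<le> d i" and "0 \<le> C"
    and "\<forall>i\<in>{1..n-1}. d (i+1) - d i \<le> c (i+1)"
    and "\<forall>i\<in>{1..n}. 0 \<le> uL i \<and> uL i < uU i"
    and "\<forall>j\<in>{1..N}. uhat j \<in> box_set n uL uU"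
    and "0 < \<epsilon>"
  shows "(dras_val n c d C T 1 uL uU N uhat \<epsilon> = lp1_val n c d C T uL uU N uhat \<epsilon> \<and>
          dras_opt n c d C T 1 uL uU N uhat \<epsilon> = lp1_opt n c d C T uL uU N uhat \<epsilon>) \<and>
         (dras_val n c d C T 2 uL uU N uhat \<epsilon> = socp_val n c d C T uL uU N uhat \<epsilon> \<and>
          dras_opt n c d C T 2 uL uU N uhat \<epsilon> = socp_opt n c d C T uL uU N uhat \<epsilon>)"
proof -
  note n1 = assms(1) and N1 = assms(2) and c0 = assms(4) and d0 = assms(5) and C0 = assms(6)
    and tel = assms(7) and LU = assms(8) and uh = assms(9) and e0 = assms(10)
  define feas1 where "feas1 = (\<lambda>x :: real \<times> vec \<times> (nat \<Rightarrow> nat \<Rightarrow> real) \<times> (nat \<Rightarrow> nat \<Rightarrow> nat \<Rightarrow> real).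
     lp1_feas n c d C T uL uU N uhat (fst x) (fst (snd x)) (fst (snd (snd x))) (snd (snd (snd x))))"
  have K1a: "\<forall>x. feas1 x \<longrightarrow> fst (snd x) \<in> schedules n T \<and> 0 \<le> fst x \<and>
     (\<forall>j\<in>{1..N}. \<forall>u\<in>box_set n uL uU. fval n c d C (fst (snd x)) u - fst x * cst 1 n uhat j u \<le> (\<Sum>i=1..n. fst (snd (snd x)) i j))"
    unfolding feas1_def using lp1_K1[OF c0 d0 C0 uh] by blast
  have K2a: "\<forall>s\<in>schedules n T. \<forall>\<rho>\<ge>0. \<exists>x. feas1 x \<and> fst (snd x) = s \<and> fst x = \<rho> \<and>
     (\<forall>j\<in>{1..N}. \<exists>u\<in>box_set n uL uU. (\<Sum>i=1..n. fst (snd (snd x)) i j) \<le> fval n c d C s u - \<rho> * cst 1 n uhat j u)"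
  proof (intro ballI allI impI)
    fix s and \<rho> :: real assume s: "s \<in> schedules n T" and r: "0 \<le> \<rho>"
    obtain \<gamma> z where "lp1_feas n c d C T uL uU N uhat \<rho> s \<gamma> z"
      "\<forall>j\<in>{1..N}. \<exists>u\<in>box_set n uL uU. (\<Sum>i=1..n. \<gamma> i j) \<le> fval n c d C s u - \<rho> * cst 1 n uhat j u"
      using lp1_K2[OF n1 c0 d0 C0 tel uh s r] by blast
    then show "\<exists>x. feas1 x \<and> fst (snd x) = s \<and> fst x = \<rho> \<and>
     (\<forall>j\<in>{1..N}. \<exists>u\<in>box_set n uL uU. (\<Sum>i=1..n. fst (snd (snd x)) i j) \<le> fval n c d C s u - \<rho> * cst 1 n uhat j u)"
      unfolding feas1_def by (intro exI[of _ "(\<rho>, s, \<gamma>, z)"]) simp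
  qed
  note G1 = final_generic[OF n1 N1 order_refl c0 d0 C0 tel uh e0 K1a K2a]
  have set1: "{(\<rho>, s, \<gamma>, z). lp1_feas n c d C T uL uU N uhat \<rho> s \<gamma> z} = {x. feas1 x}"
    unfolding feas1_def by auto
  have obj1: "\<And>x. lp1_obj n N \<epsilon> (fst x) (fst (snd (snd x))) = \<epsilon> ^ 1 * fst x + (1 / real N) * (\<Sum>j=1..N. \<Sum>i=1..n. fst (snd (snd x)) i j)"
    unfolding lp1_obj_def by simp
  have v1: "dras_val n c d C T 1 uL uU N uhat \<epsilon> = lp1_val n c d C T uL uU N uhat \<epsilon>"
    unfolding G1(1) lp1_val_def set1 obj1 ..
  have o1: "dras_opt n c d C T 1 uL uU N uhat \<epsilon> = lp1_opt n c d C T uL uU N uhat \<epsilon>"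
  proof -
    have "dras_opt n c d C T 1 uL uU N uhat \<epsilon> = {s. \<exists>x. feas1 x \<and> fst (snd x) = s \<and>
       ereal (lp1_obj n N \<epsilon> (fst x) (fst (snd (snd x)))) = lp1_val n c d C T uL uU N uhat \<epsilon>}"
      unfolding G1(2) v1[symmetric] G1(1) obj1 ..
    also have "\<dots> = lp1_opt n c d C T uL uU N uhat \<epsilon>"
      unfolding lp1_opt_def feas1_def
    proof (intro set_eqI iffI)
      fix s assume "s \<in> {s. \<exists>x. lp1_feas n c d C T uL uU N uhat (fst x) (fst (snd x)) (fst (snd (snd x))) (snd (snd (snd x))) \<and> fst (snd x) = s \<and>
          ereal (lp1_obj n N \<epsilon> (fst x) (fst (snd (snd x)))) = lp1_val n c d C T uL uU N uhat \<epsilon>}"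
      then obtain x where "lp1_feas n c d C T uL uU N uhat (fst x) (fst (snd x)) (fst (snd (snd x))) (snd (snd (snd x)))"
        "fst (snd x) = s" "ereal (lp1_obj n N \<epsilon> (fst x) (fst (snd (snd x)))) = lp1_val n c d C T uL uU N uhat \<epsilon>" by blast
      then show "s \<in> {s. \<exists>\<rho> \<gamma> z. lp1_feas n c d C T uL uU N uhat \<rho> s \<gamma> z \<and> ereal (lp1_obj n N \<epsilon> \<rho> \<gamma>) = lp1_val n c d C T uL uU N uhat \<epsilon>}"
        by blast
    next
      fix s assume "s \<in> {s. \<exists>\<rho> \<gamma> z. lp1_feas n c d C T uL uU N uhat \<rho> s \<gamma> z \<and> ereal (lp1_obj n N \<epsilon> \<rho> \<gamma>) = lp1_val n c d C T uL uU N uhat \<epsilon>}"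
      then obtain \<rho> \<gamma> z where "lp1_feas n c d C T uL uU N uhat \<rho> s \<gamma> z" "ereal (lp1_obj n N \<epsilon> \<rho> \<gamma>) = lp1_val n c d C T uL uU N uhat \<epsilon>" by blast
      then show "s \<in> {s. \<exists>x. lp1_feas n c d C T uL uU N uhat (fst x) (fst (snd x)) (fst (snd (snd x))) (snd (snd (snd x))) \<and> fst (snd x) = s \<and>
          ereal (lp1_obj n N \<epsilon> (fst x) (fst (snd (snd x)))) = lp1_val n c d C T uL uU N uhat \<epsilon>}"
        by (intro CollectI exI[of _ "(\<rho>, s, \<gamma>, z)"]) simp
    qed
    finally show ?thesis .
  qed
  define feas2 where "feas2 = (\<lambda>x :: real \<times> vec \<times> (nat \<Rightarrow> nat \<Rightarrow> real) \<times> (nat \<Rightarrow> nat \<Rightarrow> nat \<Rightarrow> real)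
       \<times> (nat \<Rightarrow> nat \<Rightarrow> nat \<Rightarrow> real) \<times> (nat \<Rightarrow> nat \<Rightarrow> nat \<Rightarrow> real) \<times> (nat \<Rightarrow> nat \<Rightarrow> nat \<Rightarrow> real).
     socp_feas n c d C T uL uU N uhat (fst x) (fst (snd x)) (fst (snd (snd x))) (fst (snd (snd (snd x))))
       (fst (snd (snd (snd (snd x))))) (fst (snd (snd (snd (snd (snd x)))))) (snd (snd (snd (snd (snd (snd x)))))))"
  have K1b: "\<forall>x. feas2 x \<longrightarrow> fst (snd x) \<in> schedules n T \<and> 0 \<le> fst x \<and>
     (\<forall>j\<in>{1..N}. \<forall>u\<in>box_set n uL uU. fval n c d C (fst (snd x)) u - fst x * cst 2 n uhat j u \<le> (\<Sum>i=1..n. fst (snd (snd x)) i j))"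
    unfolding feas2_def using socp_K1[OF c0 d0 C0 uh] by blast
  have K2b: "\<forall>s\<in>schedules n T. \<forall>\<rho>\<ge>0. \<exists>x. feas2 x \<and> fst (snd x) = s \<and> fst x = \<rho> \<and>
     (\<forall>j\<in>{1..N}. \<exists>u\<in>box_set n uL uU. (\<Sum>i=1..n. fst (snd (snd x)) i j) \<le> fval n c d C s u - \<rho> * cst 2 n uhat j u)"
  proof (intro ballI allI impI)
    fix s and \<rho> :: real assume s: "s \<in> schedules n T" and r: "0 \<le> \<rho>"
    obtain \<gamma> z bL bU rr where "socp_feas n c d C T uL uU N uhat \<rho> s \<gamma> z bL bU rr"
      "\<forall>j\<in>{1..N}. \<exists>u\<in>box_set n uL uU. (\<Sum>i=1..n. \<gamma> i j) \<le> fval n c d C s u - \<rho> * cst 2 n uhat j u"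
      using socp_K2[OF n1 c0 d0 C0 tel LU uh s r] by blast
    then show "\<exists>x. feas2 x \<and> fst (snd x) = s \<and> fst x = \<rho> \<and>
     (\<forall>j\<in>{1..N}. \<exists>u\<in>box_set n uL uU. (\<Sum>i=1..n. fst (snd (snd x)) i j) \<le> fval n c d C s u - \<rho> * cst 2 n uhat j u)"
      unfolding feas2_def by (intro exI[of _ "(\<rho>, s, \<gamma>, z, bL, bU, rr)"]) simp
  qed
  have two: "(1::nat) \<le> 2" by simp
  note G2 = final_generic[OF n1 N1 two c0 d0 C0 tel uh e0 K1b K2b]
  have set2: "{(\<rho>, s, \<gamma>, z, bL, bU, rr). socp_feas n c d C T uL uU N uhat \<rho> s \<gamma> z bL bU rr} = {x. feas2 x}"
    unfolding feas2_def by auto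
  have obj2: "\<And>x. socp_obj n N \<epsilon> (fst x) (fst (snd (snd x))) = \<epsilon> ^ 2 * fst x + (1 / real N) * (\<Sum>j=1..N. \<Sum>i=1..n. fst (snd (snd x)) i j)"
    unfolding socp_obj_def by simp
  have v2: "dras_val n c d C T 2 uL uU N uhat \<epsilon> = socp_val n c d C T uL uU N uhat \<epsilon>"
    unfolding G2(1) socp_val_def set2 obj2 ..
  have o2: "dras_opt n c d C T 2 uL uU N uhat \<epsilon> = socp_opt n c d C T uL uU N uhat \<epsilon>"
  proof -
    have "dras_opt n c d C T 2 uL uU N uhat \<epsilon> = {s. \<exists>x. feas2 x \<and> fst (snd x) = s \<and>
       ereal (socp_obj n N \<epsilon> (fst x) (fst (snd (snd x)))) = socp_val n c d C T uL uU N uhat \<epsilon>}"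
      unfolding G2(2) v2[symmetric] G2(1) obj2 ..
    also have "\<dots> = socp_opt n c d C T uL uU N uhat \<epsilon>"
      unfolding socp_opt_def
    proof (intro set_eqI iffI)
      fix s assume "s \<in> {s. \<exists>x. feas2 x \<and> fst (snd x) = s \<and>
       ereal (socp_obj n N \<epsilon> (fst x) (fst (snd (snd x)))) = socp_val n c d C T uL uU N uhat \<epsilon>}"
      then obtain x where x: "feas2 x" "fst (snd x) = s" "ereal (socp_obj n N \<epsilon> (fst x) (fst (snd (snd x)))) = socp_val n c d C T uL uU N uhat \<epsilon>"
        by blast
      obtain a b g zz bl bu rr where xe: "x = (a, b, g, zz, bl, bu, rr)" by (cases x) auto
      show "s \<in> {s. \<exists>\<rho> \<gamma> z \<beta>L \<beta>U r. socp_feas n c d C T uL uU N uhat \<rho> s \<gamma> z \<beta>L \<beta>U r \<and>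
          ereal (socp_obj n N \<epsilon> \<rho> \<gamma>) = socp_val n c d C T uL uU N uhat \<epsilon>}"
      proof -
        have "socp_feas n c d C T uL uU N uhat a s g zz bl bu rr" "ereal (socp_obj n N \<epsilon> a g) = socp_val n c d C T uL uU N uhat \<epsilon>"
          using x unfolding xe feas2_def by auto
        then show ?thesis by blast
      qed
    next
      fix s assume "s \<in> {s. \<exists>\<rho> \<gamma> z \<beta>L \<beta>U r. socp_feas n c d C T uL uU N uhat \<rho> s \<gamma> z \<beta>L \<beta>U r \<and>
          ereal (socp_obj n N \<epsilon> \<rho> \<gamma>) = socp_val n c d C T uL uU N uhat \<epsilon>}"
      then obtain \<rho> \<gamma> z bL bU rr where "socp_feas n c d C T uL uU N uhat \<rho> s \<gamma> z bL bU rr"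
        "ereal (socp_obj n N \<epsilon> \<rho> \<gamma>) = socp_val n c d C T uL uU N uhat \<epsilon>" by blast
      then show "s \<in> {s. \<exists>x. feas2 x \<and> fst (snd x) = s \<and>
       ereal (socp_obj n N \<epsilon> (fst x) (fst (snd (snd x)))) = socp_val n c d C T uL uU N uhat \<epsilon>}"
        unfolding feas2_def by (intro CollectI exI[of _ "(\<rho>, s, \<gamma>, z, bL, bU, rr)"]) simp
    qed
    finally show ?thesis .
  qed
  show ?thesis using v1 o1 v2 o2 by blast
qed

end
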